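(* Let $X$ be a real Banach space, $f\in\Gamma_0(X)$, $S_f\ne\emptyset$, $\varepsilon\ge0$. Then $$\mathrm{Er}\{\mathrm{Ptb}^w(f,\varepsilon)\}>0\Rightarrow\mathrm{Er}\{\mathrm{Ptb}^w_l(f,\varepsilon)\}>0\Rightarrow\varepsilon\le|\partial f|_{\rm bd},$$ and $$\varepsilon<|\partial f|_{\rm bd}\Rightarrow\mathrm{Er}\{\mathrm{Ptb}(f,\varepsilon)\}>0\Rightarrow\mathrm{Er}\{\mathrm{Ptb}_l(f,\varepsilon)\}>0.$$
   Context: $X^*$ is the dual, $\mathbb{B}^*$ its closed unit ball. $\Gamma_0(X)$: proper convex lsc extended-real-valued functions on $X$. For convex $f$, $\partial f(x):=\{x^*\in X^*\mid \langle x^*,u-x\rangle\le f(u)-f(x)\ \forall u\in X\}$. $d(x,S)=\inf_{u\in S}\|u-x\|$, $d(x,\emptyset)=+\infty$, $\inf\emptyset=+\infty$. $S_f:=\{x\mid f(x)\le0\}$, $S_f^=:=\{x\mid f(x)=0\}$. Global error bound modulus: $\mathrm{Er}\,f:=\inf_{f(x)>0}\frac{f(x)}{d(x,S_f)}$. $|\partial f|_{\rm bd}:=\inf_{f(x)=0} d(0,\mathrm{bd}\,\partial f(x))$ (boundary in norm topology of $X^*$). For $x\in S_f^=$, $\varepsilon,\delta\ge0$: $\tau(f,x,\varepsilon,\delta):=\inf_{u:\,f(u)\ge-\varepsilon\|u-x\|-\delta} d(0,\partial f(u))$ if $0\notin\mathrm{int}\,\partial f(x)$, and $:=d(0,\mathrm{bd}\,\partial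 f(x))$ if $0\in\mathrm{int}\,\partial f(x)$. For $\varepsilon\ge0$: $g\in\mathrm{Ptb}(f,\varepsilon)$ if $S_g\ne\emptyset$, $g=f+p$ with $p:X\to\mathbb{R}$ convex, and there exist $x\in S_f^=$ and $\xi\ge0$ such that $\xi+|\partial f|_{\rm bd}-\tau(f,x,\xi,|p(x)|)\le\varepsilon$ and $|p(u)-p(x)|\le\xi\|u-x\|$ for all $u\in X$. $g\in\mathrm{Ptb}^w(f,\varepsilon)$ if $S_g\ne\emptyset$, $g=f+p$ with $p:X\to\mathbb{R}$ convex, and there is $x\in S_f^=$ with $|p(u)-p(x)|\le\varepsilon\|u-x\|$ for all $u$. $\mathrm{Ptb}_l(f,\varepsilon):=\{g\mid g(u)-f(u)=\langle x^*,u-x\rangle\ \forall u,\ \text{for some } x\in S_f^=,\ \xi\ge0,\ x^*\in\xi\mathbb{B}^*\text{ with }\xi+|\partial f|_{\rm bd}-\tau(f,x,\xi,0)\le\varepsilon\}$; $\mathrm{Ptb}^w_l(f,\varepsilon):=\{g\mid g(u)-f(u)=\langle x^*,u-x\rangle\ \forall u,\ \text{for some } x\in S_f^=,\ x^*\in\varepsilon\mathbb{B}^*\}$. For each such family $\mathcal{F}$, $\mathrm{Er}\{\mathcal{F}\}:=\inf_{g\in\mathcal{F}}\mathrm{Er}\,g$. *)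

theory Defs
  imports "HOL-Analysis.Analysis"
begin

text \<open>Setting: X is a real Banach space (type class banach), its dual X* is the
space of bounded linear functionals 'a \<Rightarrow>L real with the operator norm
(norm topology).\<close>

definition proper_fun :: "('a \<Rightarrow> ereal) \<Rightarrow> bool" where
  "proper_fun f \<longleftrightarrow> (\<forall>x. f x \<noteq> -\<infinity>) \<and> (\<exists>x. f x \<noteq> \<infinity>)"

definition convex_fun :: "('a::real_vector \<Rightarrow> ereal) \<Rightarrow> bool" where
  "convex_fun f \<longleftrightarrow> convex {(x, r::real). f x \<le> ereal r}"

definition lsc_fun :: "('a::topological_space \<Rightarrow> ereal) \<Rightarrow> bool" where
  "lsc_fun f \<longleftrightarrow> (\<forall>x. \<forall>c. c < f x \<longrightarrow> (\<forall>\<^sub>F u in at x. c < f u))"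

definition Gamma0 :: "('a::real_normed_vector \<Rightarrow> ereal) set" where
  "Gamma0 = {f. proper_fun f \<and> convex_fun f \<and> lsc_fun f}"

definition subdiff :: "('a::real_normed_vector \<Rightarrow> ereal) \<Rightarrow> 'a \<Rightarrow> ('a \<Rightarrow>\<^sub>L real) set" where
  "subdiff f x = (if \<bar>f x\<bar> \<noteq> \<infinity> then
      {xs. \<forall>u. ereal (blinfun_apply xs (u - x)) \<le> f u - f x} else {})"

text \<open>Distance to a set, with d(x, empty) = +infinity.\<close>
definition dst :: "'b::real_normed_vector \<Rightarrow> 'b set \<Rightarrow> ereal" where
  "dst x S = (INF u\<in>S. ereal (norm (u - x)))"

definition Sf :: "('a \<Rightarrow> ereal) \<Rightarrow> 'a set" where
  "Sf f = {x. f x \<le> 0}"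

definition Sfeq :: "('a \<Rightarrow> ereal) \<Rightarrow> 'a set" where
  "Sfeq f = {x. f x = 0}"

definition Er :: "('a::real_normed_vector \<Rightarrow> ereal) \<Rightarrow> ereal" where
  "Er f = (INF x\<in>{x. f x > 0}. f x / dst x (Sf f))"

definition bdmod :: "('a::real_normed_vector \<Rightarrow> ereal) \<Rightarrow> ereal" where
  "bdmod f = (INF x\<in>Sfeq f. dst 0 (frontier (subdiff f x)))"

definition tau :: "('a::real_normed_vector \<Rightarrow> ereal) \<Rightarrow> 'a \<Rightarrow> real \<Rightarrow> real \<Rightarrow> ereal" where
  "tau f x \<epsilon> \<delta> = (if 0 \<in> interior (subdiff f x) then dst 0 (frontier (subdiff f x))
      else (INF u\<in>{u. f u \<ge> ereal (- \<epsilon> * norm (u - x) - \<delta>)}. dst 0 (subdiff f u)))"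

text \<open>The condition  xi + |df|_bd - tau <= eps  is written as  xi + |df|_bd <= eps + tau
  to avoid the undefined expression infinity - infinity.\<close>
definition Ptb :: "('a::real_normed_vector \<Rightarrow> ereal) \<Rightarrow> real \<Rightarrow> ('a \<Rightarrow> ereal) set" where
  "Ptb f \<epsilon> = {g. Sf g \<noteq> {} \<and> (\<exists>p::'a \<Rightarrow> real. convex_on UNIV p \<and>
      g = (\<lambda>u. f u + ereal (p u)) \<and>
      (\<exists>x\<in>Sfeq f. \<exists>\<xi>\<ge>0. ereal \<xi> + bdmod f \<le> ereal \<epsilon> + tau f x \<xi> \<bar>p x\<bar> \<and>
          (\<forall>u. \<bar>p u - p x\<bar> \<le> \<xi> * norm (u - x))))}"

definition Ptbw :: "('a::real_normed_vector \<Rightarrow> ereal) \<Rightarrow> real \<Rightarrow> ('a \<Rightarrow> ereal) set" where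
  "Ptbw f \<epsilon> = {g. Sf g \<noteq> {} \<and> (\<exists>p::'a \<Rightarrow> real. convex_on UNIV p \<and>
      g = (\<lambda>u. f u + ereal (p u)) \<and>
      (\<exists>x\<in>Sfeq f. \<forall>u. \<bar>p u - p x\<bar> \<le> \<epsilon> * norm (u - x)))}"

definition Ptbl :: "('a::real_normed_vector \<Rightarrow> ereal) \<Rightarrow> real \<Rightarrow> ('a \<Rightarrow> ereal) set" where
  "Ptbl f \<epsilon> = {g. \<exists>x\<in>Sfeq f. \<exists>\<xi>\<ge>0. \<exists>xs::'a \<Rightarrow>\<^sub>L real. norm xs \<le> \<xi> \<and>
      ereal \<xi> + bdmod f \<le> ereal \<epsilon> + tau f x \<xi> 0 \<and>
      g = (\<lambda>u. f u + ereal (blinfun_apply xs (u - x)))}"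

definition Ptbwl :: "('a::real_normed_vector \<Rightarrow> ereal) \<Rightarrow> real \<Rightarrow> ('a \<Rightarrow> ereal) set" where
  "Ptbwl f \<epsilon> = {g. \<exists>x\<in>Sfeq f. \<exists>xs::'a \<Rightarrow>\<^sub>L real. norm xs \<le> \<epsilon> \<and>
      g = (\<lambda>u. f u + ereal (blinfun_apply xs (u - x)))}"

definition ErF :: "('a::real_normed_vector \<Rightarrow> ereal) set \<Rightarrow> ereal" where
  "ErF F = (INF g\<in>F. Er g)"

end

theory Submission
  imports Defs
begin


definition sublin :: "('a::real_vector \<Rightarrow> real) \<Rightarrow> bool" where
  "sublin q \<longleftrightarrow> (\<forall>x y. q (x + y) \<le> q x + q y) \<and> (\<forall>c x. c \<ge> 0 \<longrightarrow> q (c *\<^sub>R x) = c * q x)"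

lemma sublin_0: "sublin q \<Longrightarrow> q 0 = 0"
  unfolding sublin_def by (metis mult_zero_left order_refl scaleR_zero_left)

lemma sublin_neg: "sublin q \<Longrightarrow> - q (-x) \<le> q x"
proof -
  assume s: "sublin q"
  have "q (x + -x) \<le> q x + q (-x)" using s unfolding sublin_def by blast
  thus ?thesis using sublin_0[OF s] by simp
qed

definition shft :: "('a::real_vector \<Rightarrow> real) \<Rightarrow> 'a \<Rightarrow> 'a \<Rightarrow> real" where
  "shft q a x = Inf ((\<lambda>t. q (x + t *\<^sub>R a) - t * q a) ` {0..})"

lemma shft_lb:
  assumes s: "sublin q" and t: "t \<ge> 0"
  shows "- q (-x) \<le> q (x + t *\<^sub>R a) - t * q a"
proof -
  have "q (t *\<^sub>R a) = t * q a" using s t unfolding sublin_def by blast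
  moreover have "q ((x + t *\<^sub>R a) + -x) \<le> q (x + t *\<^sub>R a) + q (-x)" using s unfolding sublin_def by blast
  ultimately show ?thesis by simp
qed

lemma shft_bdd: "sublin q \<Longrightarrow> bdd_below ((\<lambda>t. q (x + t *\<^sub>R a) - t * q a) ` {0..})"
  unfolding bdd_below_def using shft_lb by fastforce

lemma shft_le: "sublin q \<Longrightarrow> t \<ge> 0 \<Longrightarrow> shft q a x \<le> q (x + t *\<^sub>R a) - t * q a"
  unfolding shft_def by (rule cInf_lower) (auto intro: shft_bdd)

lemma shft_ge: "sublin q \<Longrightarrow> - q (-x) \<le> shft q a x"
  unfolding shft_def by (rule cInf_greatest) (auto intro: shft_lb)

lemma shft_below: "sublin q \<Longrightarrow> shft q a x \<le> q x"
  using shft_le[of q 0] by simp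

lemma shft_neg: "sublin q \<Longrightarrow> shft q a (-a) \<le> - q a"
  using shft_le[of q 1 a "-a"] sublin_0[of q] by simp

lemma shft_sublin:
  assumes s: "sublin q" shows "sublin (shft q a)"
  unfolding sublin_def
proof (intro conjI allI impI)
  fix x y
  have A: "shft q a (x + y) - (q (y + t2 *\<^sub>R a) - t2 * q a) \<le> shft q a x" if t2: "t2 \<ge> 0" for t2
    unfolding shft_def[of q a x]
  proof (rule cInf_greatest)
    show "(\<lambda>t. q (x + t *\<^sub>R a) - t * q a) ` {0..} \<noteq> {}" by auto
  next
    fix e assume "e \<in> (\<lambda>t. q (x + t *\<^sub>R a) - t * q a) ` {0..}"
    then obtain t1 where t1: "t1 \<ge> 0" "e = q (x + t1 *\<^sub>R a) - t1 * q a" by auto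
    have "shft q a (x + y) \<le> q (x + y + (t1 + t2) *\<^sub>R a) - (t1 + t2) * q a"
      using shft_le[OF s, of "t1+t2"] t1 t2 by simp
    also have "q (x + y + (t1 + t2) *\<^sub>R a) \<le> q (x + t1 *\<^sub>R a) + q (y + t2 *\<^sub>R a)"
    proof -
      have "x + y + (t1 + t2) *\<^sub>R a = (x + t1 *\<^sub>R a) + (y + t2 *\<^sub>R a)" by (simp add: algebra_simps)
      thus ?thesis using s unfolding sublin_def by presburger
    qed
    finally show "shft q a (x + y) - (q (y + t2 *\<^sub>R a) - t2 * q a) \<le> e"
      using t1 by (simp add: algebra_simps)
  qed
  have "shft q a (x + y) - shft q a x \<le> shft q a y"
    unfolding shft_def[of q a y]
    by (rule cInf_greatest) (use A in force)+
  thus "shft q a (x + y) \<le> shft q a x + shft q a y" by simp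
next
  fix c :: real and x assume c: "c \<ge> 0"
  show "shft q a (c *\<^sub>R x) = c * shft q a x"
  proof (cases "c = 0")
    case True
    have "shft q a 0 = 0"
    proof (rule antisym)
      show "shft q a 0 \<le> 0" using shft_below[OF s, of a 0] sublin_0[OF s] by simp
      show "0 \<le> shft q a 0" using shft_ge[OF s, of 0 a] sublin_0[OF s] by simp
    qed
    thus ?thesis using True by simp
  next
    case False
    hence cp: "c > 0" using c by simp
    have le1: "shft q a (c *\<^sub>R x) \<le> c * shft q a x"
    proof -
      have "shft q a (c *\<^sub>R x) / c \<le> shft q a x"
        unfolding shft_def[of q a x]
      proof (rule cInf_greatest)
        show "(\<lambda>t. q (x + t *\<^sub>R a) - t * q a) ` {0..} \<noteq> {}" by auto
      next
        fix e assume "e \<in> (\<lambda>t. q (x + t *\<^sub>R a) - t * q a) ` {0..}"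
        then obtain t where t: "t \<ge> 0" "e = q (x + t *\<^sub>R a) - t * q a" by auto
        have "shft q a (c *\<^sub>R x) \<le> q (c *\<^sub>R x + (c*t) *\<^sub>R a) - (c*t) * q a"
          using shft_le[OF s, of "c*t"] t cp by simp
        also have "q (c *\<^sub>R x + (c*t) *\<^sub>R a) = c * q (x + t *\<^sub>R a)"
          proof -
          have "c *\<^sub>R x + (c*t) *\<^sub>R a = c *\<^sub>R (x + t *\<^sub>R a)" by (simp add: algebra_simps)
          thus ?thesis using s cp unfolding sublin_def by (metis less_imp_le)
        qed
        finally have "shft q a (c *\<^sub>R x) \<le> c * q (x + t *\<^sub>R a) - c * t * q a" by simp
        also have "c * q (x + t *\<^sub>R a) - c * t * q a = c * e" using t(2) by (simp add: algebra_simps flip: distrib_left)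
        finally show "shft q a (c *\<^sub>R x) / c \<le> e" using cp by (simp add: field_simps)
      qed
      thus ?thesis using cp by (simp add: field_simps)
    qed
    have le2: "c * shft q a x \<le> shft q a (c *\<^sub>R x)"
      unfolding shft_def[of q a "c *\<^sub>R x"]
    proof (rule cInf_greatest)
      show "(\<lambda>t. q (c *\<^sub>R x + t *\<^sub>R a) - t * q a) ` {0..} \<noteq> {}" by auto
    next
      fix e assume "e \<in> (\<lambda>t. q (c *\<^sub>R x + t *\<^sub>R a) - t * q a) ` {0..}"
      then obtain t where t: "t \<ge> 0" "e = q (c *\<^sub>R x + t *\<^sub>R a) - t * q a" by auto
      have "shft q a x \<le> q (x + (t/c) *\<^sub>R a) - (t/c) * q a"
        using shft_le[OF s, of "t/c"] t cp by simp
      hence H: "c * shft q a x \<le> c * (q (x + (t/c) *\<^sub>R a) - (t/c) * q a)"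
        using cp by simp
      have E: "q (c *\<^sub>R x + t *\<^sub>R a) = c * q (x + (t/c) *\<^sub>R a)"
      proof -
        have "c *\<^sub>R x + t *\<^sub>R a = c *\<^sub>R (x + (t/c) *\<^sub>R a)" using cp by (simp add: scaleR_add_right)
        thus ?thesis using s cp unfolding sublin_def by (metis less_imp_le)
      qed
      have "c * (q (x + (t/c) *\<^sub>R a) - (t/c) * q a) = c * q (x + (t/c) *\<^sub>R a) - t * q a"
        using cp by (simp add: right_diff_distrib)
      hence "c * (q (x + (t/c) *\<^sub>R a) - (t/c) * q a) = e" using t E by simp
      with H show "c * shft q a x \<le> e" by simp
    qed
    show ?thesis using le1 le2 by simp
  qed
qed

definition Ep :: "('a \<Rightarrow> real) \<Rightarrow> ('a \<times> real) set" where
  "Ep q = {(x, r). q x < r}"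

lemma Ep_sub: "Ep q \<subseteq> Ep q' \<longleftrightarrow> (\<forall>x. q' x \<le> q x)"
proof
  assume H: "Ep q \<subseteq> Ep q'"
  show "\<forall>x. q' x \<le> q x"
  proof (rule ccontr)
    assume "\<not> (\<forall>x. q' x \<le> q x)"
    then obtain x where x: "q' x > q x" by (meson not_le)
    have "(x, (q x + q' x)/2) \<in> Ep q" using x unfolding Ep_def by auto
    moreover have "(x, (q x + q' x)/2) \<notin> Ep q'" using x unfolding Ep_def by auto
    ultimately show False using H by blast
  qed
qed (auto simp: Ep_def intro: le_less_trans)

lemma sublin_lin:
  assumes s: "sublin q" and odd: "\<And>a. q (-a) \<le> - q a"
  shows "(\<forall>x y. q (x+y) = q x + q y) \<and> (\<forall>c x. q (c *\<^sub>R x) = c * q x)"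
proof -
  have odd2: "q (-a) = - q a" for a using odd[of a] sublin_neg[OF s, of a] by simp
  have add: "q (x+y) = q x + q y" for x y
  proof -
    have "q (x+y) \<le> q x + q y" using s unfolding sublin_def by blast
    moreover have "q (-x + -y) \<le> q (-x) + q (-y)" using s unfolding sublin_def by blast
    hence "- q (x+y) \<le> - q x - q y" using odd2[of "x+y"] odd2[of x] odd2[of y] by (simp add: add.commute)
    ultimately show ?thesis by simp
  qed
  have hom: "q (c *\<^sub>R x) = c * q x" for c x
  proof (cases "c \<ge> 0")
    case True thus ?thesis using s unfolding sublin_def by blast
  next
    case False
    have hom0: "\<forall>c\<ge>0. \<forall>x. q (c *\<^sub>R x) = c * q x" using s unfolding sublin_def by blast
    have nc: "0 \<le> -c" using False by simp
    have "q ((-c) *\<^sub>R (-x)) = (-c) * q (-x)" using hom0 nc by blast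
    moreover have "(-c) *\<^sub>R (-x) = c *\<^sub>R x" by simp
    ultimately show ?thesis using odd2[of x] by simp
  qed
  show ?thesis using add hom by blast
qed

lemma HB1:
  fixes p :: "'a::real_vector \<Rightarrow> real"
  assumes sp: "sublin p"
  shows "\<exists>l. (\<forall>x y. l (x+y) = l x + l y) \<and> (\<forall>c x. l (c *\<^sub>R x) = c * l x) \<and> (\<forall>x. l x \<le> p x)"
proof -
  define A where "A = {Ep q | q. sublin q \<and> (\<forall>x. q x \<le> p x)}"
  have pA: "Ep p \<in> A" unfolding A_def using sp by blast
  have "\<exists>M\<in>A. \<forall>X\<in>A. M \<subseteq> X \<longrightarrow> X = M"
  proof (rule Zorn_Lemma2, intro ballI)
    fix C assume C: "C \<in> chains A"
    hence CA: "C \<subseteq> A" and Cch: "\<And>X Y. X \<in> C \<Longrightarrow> Y \<in> C \<Longrightarrow> X \<subseteq> Y \<or> Y \<subseteq> X"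
      unfolding chains_def chain_subset_def by auto
    show "\<exists>U\<in>A. \<forall>X\<in>C. X \<subseteq> U"
    proof (cases "C = {}")
      case True thus ?thesis using pA by blast
    next
      case False
      define Qs where "Qs = {q. sublin q \<and> (\<forall>x. q x \<le> p x) \<and> Ep q \<in> C}"
      have XQ: "\<exists>q\<in>Qs. X = Ep q" if "X \<in> C" for X
        proof -
        have "X \<in> A" using that CA by blast
        then obtain q where "X = Ep q" "sublin q" "\<forall>x. q x \<le> p x" unfolding A_def by blast
        thus ?thesis using that unfolding Qs_def by blast
      qed
      have Qne: "Qs \<noteq> {}" using False XQ by blast
      have Qlb: "- p (-x) \<le> q x" if "q \<in> Qs" for q x
      proof -
        have "- q (-x) \<le> q x" using that sublin_neg unfolding Qs_def by blast
        moreover have "q (-x) \<le> p (-x)" using that unfolding Qs_def by blast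
        ultimately show ?thesis by linarith
      qed
      have Qch: "(\<forall>x. q1 x \<le> q2 x) \<or> (\<forall>x. q2 x \<le> q1 x)" if "q1 \<in> Qs" "q2 \<in> Qs" for q1 q2
      proof -
        have "Ep q1 \<in> C" "Ep q2 \<in> C" using that unfolding Qs_def by auto
        hence "Ep q1 \<subseteq> Ep q2 \<or> Ep q2 \<subseteq> Ep q1" using Cch by blast
        thus ?thesis unfolding Ep_sub by blast
      qed
      define m where "m x = Inf ((\<lambda>q. q x) ` Qs)" for x
      have bdd: "bdd_below ((\<lambda>q. q x) ` Qs)" for x
        unfolding bdd_below_def using Qlb by blast
      have m_le: "m x \<le> q x" if "q \<in> Qs" for q x
        unfolding m_def by (rule cInf_lower) (use that bdd in auto)
      have m_ge: "- p (-x) \<le> m x" for x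
        unfolding m_def by (rule cInf_greatest) (use Qne Qlb in auto)
      have m_p: "m x \<le> p x" for x
      proof -
        obtain q where "q \<in> Qs" using Qne by blast
        hence "m x \<le> q x" "q x \<le> p x" using m_le[of q x] unfolding Qs_def by auto
        thus ?thesis by linarith
      qed
      have m_sub: "sublin m"
        unfolding sublin_def
      proof (intro conjI allI impI)
        fix x y
        have A1: "m (x+y) - q2 y \<le> m x" if q2: "q2 \<in> Qs" for q2
          unfolding m_def[of x]
        proof (rule cInf_greatest)
          show "(\<lambda>q. q x) ` Qs \<noteq> {}" using Qne by blast
        next
          fix e assume "e \<in> (\<lambda>q. q x) ` Qs"
          then obtain q1 where q1: "q1 \<in> Qs" "e = q1 x" by auto
          show "m (x + y) - q2 y \<le> e"
          proof (cases "\<forall>z. q1 z \<le> q2 z")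
            case True
            have "m (x+y) \<le> q1 (x+y)" using m_le q1 by blast
            also have "\<dots> \<le> q1 x + q1 y" using q1 unfolding Qs_def sublin_def by blast
            finally have "m (x+y) \<le> q1 x + q1 y" .
            moreover have "q1 y \<le> q2 y" using True by blast
            ultimately show ?thesis using q1(2) by linarith
          next
            case False
            hence T: "\<forall>z. q2 z \<le> q1 z" using Qch[OF q1(1) q2] by blast
            have "m (x+y) \<le> q2 (x+y)" using m_le q2 by blast
            also have "\<dots> \<le> q2 x + q2 y" using q2 unfolding Qs_def sublin_def by blast
            finally have "m (x+y) \<le> q2 x + q2 y" .
            moreover have "q2 x \<le> q1 x" using T by blast
            ultimately show ?thesis using q1(2) by linarith
          qed
        qed
        have "m (x+y) - m x \<le> m y"
          unfolding m_def[of y]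
        proof (rule cInf_greatest)
          show "(\<lambda>q. q y) ` Qs \<noteq> {}" using Qne by blast
        next
          fix e assume "e \<in> (\<lambda>q. q y) ` Qs"
          then obtain q2 where "q2 \<in> Qs" "e = q2 y" by auto
          thus "m (x + y) - m x \<le> e" using A1[of q2] by linarith
        qed
        thus "m (x + y) \<le> m x + m y" by simp
      next
        fix c :: real and x assume c: "0 \<le> c"
        show "m (c *\<^sub>R x) = c * m x"
        proof (cases "c = 0")
          case True
          have "m 0 = 0"
          proof -
            have "\<forall>q\<in>Qs. q 0 = 0" using sublin_0 unfolding Qs_def by blast
            hence "(\<lambda>q. q 0) ` Qs = {0}" using Qne by auto
            thus ?thesis unfolding m_def by simp
          qed
          thus ?thesis using True by simp
        next
          case False
          hence cp: "c > 0" using c by simp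
          have hq: "q (c *\<^sub>R x) = c * q x" if "q \<in> Qs" for q
            using that c unfolding Qs_def sublin_def by blast
          have l1: "m (c *\<^sub>R x) / c \<le> m x"
            unfolding m_def[of x]
          proof (rule cInf_greatest)
            show "(\<lambda>q. q x) ` Qs \<noteq> {}" using Qne by blast
          next
            fix e assume "e \<in> (\<lambda>q. q x) ` Qs"
            then obtain q where q: "q \<in> Qs" "e = q x" by auto
            have "m (c *\<^sub>R x) \<le> c * q x" using m_le[OF q(1)] hq[OF q(1)] by metis
            thus "m (c *\<^sub>R x) / c \<le> e" using q cp by (simp add: field_simps)
          qed
          have l2: "c * m x \<le> m (c *\<^sub>R x)"
            unfolding m_def[of "c *\<^sub>R x"]
          proof (rule cInf_greatest)
            show "(\<lambda>q. q (c *\<^sub>R x)) ` Qs \<noteq> {}" using Qne by blast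
          next
            fix e assume "e \<in> (\<lambda>q. q (c *\<^sub>R x)) ` Qs"
            then obtain q where q: "q \<in> Qs" "e = q (c *\<^sub>R x)" by auto
            have "c * m x \<le> c * q x" using m_le[OF q(1)] cp by simp
            thus "c * m x \<le> e" using q hq by simp
          qed
          show ?thesis using l1 l2 cp by (simp add: field_simps)
        qed
      qed
      have "Ep m \<in> A" unfolding A_def using m_sub m_p by blast
      moreover have "\<forall>X\<in>C. X \<subseteq> Ep m"
      proof
        fix X assume "X \<in> C"
        then obtain q where qq: "q \<in> Qs" "X = Ep q" using XQ by blast
        have "\<forall>z. m z \<le> q z" using m_le qq(1) by blast
        thus "X \<subseteq> Ep m" unfolding qq(2) Ep_sub .
      qed
      ultimately show ?thesis by blast
    qed
  qed
  then obtain M where MA: "M \<in> A" and Mmax: "\<And>X. X \<in> A \<Longrightarrow> M \<subseteq> X \<Longrightarrow> X = M" by blast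
  obtain q0 where q0: "M = Ep q0" "sublin q0" "\<forall>x. q0 x \<le> p x" using MA unfolding A_def by blast
  have odd: "q0 (-a) \<le> - q0 a" for a
  proof -
    have ss: "sublin (shft q0 a)" using shft_sublin q0(2) by blast
    have "\<forall>x. shft q0 a x \<le> p x"
    proof
      fix x show "shft q0 a x \<le> p x" using shft_below[OF q0(2), of a x] q0(3) by (meson order_trans)
    qed
    hence inA: "Ep (shft q0 a) \<in> A" unfolding A_def using ss by blast
    have "M \<subseteq> Ep (shft q0 a)" unfolding q0(1) Ep_sub using shft_below[OF q0(2)] by blast
    hence "Ep (shft q0 a) = Ep q0" using Mmax[OF inA] q0(1) by simp
    hence "Ep (shft q0 a) \<subseteq> Ep q0" by simp
    hence "\<forall>x. q0 x \<le> shft q0 a x" unfolding Ep_sub .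
    hence "q0 (-a) \<le> shft q0 a (-a)" by blast
    thus ?thesis using shft_neg[OF q0(2), of a] by linarith
  qed
  show ?thesis using sublin_lin[OF q0(2) odd] q0(3) by blast
qed

lemma HB2:
  fixes p :: "'a::real_vector \<Rightarrow> real"
  assumes sp: "sublin p"
  shows "\<exists>l. (\<forall>x y. l (x+y) = l x + l y) \<and> (\<forall>c x. l (c *\<^sub>R x) = c * l x) \<and> (\<forall>x. l x \<le> p x) \<and> l a = p a"
proof -
  obtain l where l: "\<forall>x y. l (x+y) = l x + l y" "\<forall>c x. l (c *\<^sub>R x) = c * l x" "\<forall>x. l x \<le> shft p a x"
    using HB1[OF shft_sublin[OF sp, of a]] by blast
  have "\<forall>x. l x \<le> p x" using l(3) shft_below[OF sp] order_trans by blast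
  moreover have "l (-a) \<le> - p a" using order_trans[OF spec[OF l(3), of "-a"] shft_neg[OF sp, of a]] .
  moreover have "l (-a) = - l a" using l(2) by (metis scaleR_minus1_left mult_minus1)
  ultimately have "l a = p a" by (metis antisym neg_le_iff_le)
  thus ?thesis using l \<open>\<forall>x. l x \<le> p x\<close> by blast
qed



lemma lin_bound:
  fixes l :: "'a::real_normed_vector \<Rightarrow> real"
  assumes add: "\<forall>x y. l (x+y) = l x + l y" and hom: "\<forall>c x. l (c *\<^sub>R x) = c * l x"
    and b: "\<forall>h. norm h \<le> 1 \<longrightarrow> \<bar>l h\<bar> \<le> M"
  shows "\<exists>L::'a \<Rightarrow>\<^sub>L real. blinfun_apply L = l \<and> (M \<ge> 0 \<longrightarrow> norm L \<le> M)"
proof -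
  have l0: "l 0 = 0" using hom[rule_format, of 0 0] by simp
  have M0: "M \<ge> 0" using b[rule_format, of 0] l0 by simp
  have bd: "\<bar>l h\<bar> \<le> M * norm h" for h
  proof (cases "h = 0")
    case True thus ?thesis using l0 by simp
  next
    case False
    hence n: "norm h > 0" by simp
    have "norm (inverse (norm h) *\<^sub>R h) = 1" using n by simp
    hence "\<bar>l (inverse (norm h) *\<^sub>R h)\<bar> \<le> M" using b by simp
    moreover have "l (inverse (norm h) *\<^sub>R h) = inverse (norm h) * l h" using hom by blast
    ultimately have "inverse (norm h) * \<bar>l h\<bar> \<le> M" using n by (simp add: abs_mult)
    thus ?thesis using n by (simp add: field_simps)
  qed
  have bl: "bounded_linear l"
    by (rule bounded_linear_intro[where K=M]) (use add hom bd in \<open>auto simp: mult.commute\<close>)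
  show ?thesis
    apply (rule exI[of _ "Blinfun l"])
    using bl bd by (auto simp: bounded_linear_Blinfun_apply intro!: norm_blinfun_bound)
qed

lemma sublin_norm: "sublin (norm :: 'a::real_normed_vector \<Rightarrow> real)"
  unfolding sublin_def by (auto simp: norm_triangle_ineq)

lemma norming:
  fixes v :: "'a::real_normed_vector"
  shows "\<exists>L::'a \<Rightarrow>\<^sub>L real. norm L \<le> 1 \<and> blinfun_apply L v = norm v"
proof -
  obtain l where l: "\<forall>x y. l (x+y) = l x + l y" "\<forall>c x. l (c *\<^sub>R x) = c * l x"
      "\<forall>x. l x \<le> norm x" "l v = norm v"
    using HB2[OF sublin_norm, of v] by blast
  have "\<bar>l h\<bar> \<le> 1" if "norm h \<le> 1" for h
  proof -
    have "l (-h) = - l h" using l(2) by (metis scaleR_minus1_left mult_minus1)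
    moreover have "l (-h) \<le> norm h" using l(3) by (metis norm_minus_cancel)
    ultimately show ?thesis using l(3) that by (smt (verit))
  qed
  then obtain L :: "'a \<Rightarrow>\<^sub>L real" where "blinfun_apply L = l" "norm L \<le> 1"
    using lin_bound[OF l(1) l(2), of 1] by auto
  thus ?thesis using l(4) by auto
qed

lemma sandwich:
  fixes F Q :: "'a::real_normed_vector \<Rightarrow> real" and D :: "'a set"
  assumes cF: "convex_on D F" and D0: "0 \<in> D" and F0: "F 0 = 0"
    and cQ: "convex_on UNIV Q" and Q0: "Q 0 = 0"
    and mn: "\<forall>a\<in>D. 0 \<le> F a + Q a" and QM: "\<forall>h. norm h \<le> 1 \<longrightarrow> Q h \<le> M"
  shows "\<exists>L::'a \<Rightarrow>\<^sub>L real. (\<forall>a\<in>D. blinfun_apply L a \<le> F a) \<and> (\<forall>h. - blinfun_apply L h \<le> Q h)"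
proof -
  have cD: "convex D" using cF unfolding convex_on_def by blast
  define S where "S v = {(F a + Q b) / t | t a b. t > 0 \<and> a \<in> D \<and> a - b = t *\<^sub>R v}" for v
  define d where "d v = Inf (S v)" for v
  have LB: "- Q v \<le> (F a + Q b) / t" if t: "t > 0" and a: "a \<in> D" and ab: "a - b = t *\<^sub>R v" for v t a b
  proof -
    define th where "th = 1 / (1 + t)"
    have th0: "0 \<le> th" "th \<le> 1" using t unfolding th_def by auto
    have thD: "th *\<^sub>R a \<in> D"
      using convexD_alt[OF cD D0 a th0] by simp
    have "F ((1 - th) *\<^sub>R 0 + th *\<^sub>R a) \<le> (1 - th) * F 0 + th * F a"
      by (rule convex_onD[OF cF th0 D0 a])
    hence f1: "F (th *\<^sub>R a) \<le> th * F a" using F0 by simp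
    have eq: "th *\<^sub>R a = (1 - th) *\<^sub>R v + th *\<^sub>R b"
    proof -
      have "a = b + t *\<^sub>R v" using ab by (simp add: algebra_simps)
      hence "th *\<^sub>R a = th *\<^sub>R b + (th * t) *\<^sub>R v" by (simp add: algebra_simps)
      moreover have "th * t = 1 - th" using t unfolding th_def by (simp add: field_simps)
      ultimately show ?thesis by simp
    qed
    have "Q ((1 - th) *\<^sub>R v + th *\<^sub>R b) \<le> (1 - th) * Q v + th * Q b"
      by (rule convex_onD[OF cQ th0]) auto
    hence f2: "Q (th *\<^sub>R a) \<le> (1 - th) * Q v + th * Q b" using eq by simp
    have "0 \<le> F (th *\<^sub>R a) + Q (th *\<^sub>R a)" using mn thD by blast
    hence "0 \<le> th * (F a + Q b) + (1 - th) * Q v" using f1 f2 by (simp add: algebra_simps)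
    hence "0 \<le> (1 + t) * (th * (F a + Q b) + (1 - th) * Q v)" using t by simp
    moreover have "(1 + t) * (th * (F a + Q b) + (1 - th) * Q v) = F a + Q b + t * Q v"
    proof -
      have e1: "(1 + t) * th = 1" using t unfolding th_def by simp
      have e2: "(1 + t) * (1 - th) = t" using e1 by (simp add: algebra_simps)
      have "(1 + t) * (th * (F a + Q b) + (1 - th) * Q v) = ((1 + t) * th) * (F a + Q b) + ((1 + t) * (1 - th)) * Q v"
        by (simp add: algebra_simps)
      thus ?thesis using e1 e2 by simp
    qed
    ultimately have "- (t * Q v) \<le> F a + Q b" by linarith
    thus ?thesis using t by (simp add: field_simps)
  qed
  have SI: "(F a + Q b) / t \<in> S v" if "t > 0" "a \<in> D" "a - b = t *\<^sub>R v" for v t a b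
    unfolding S_def using that by blast
  have SE: "\<exists>t a b. t > 0 \<and> a \<in> D \<and> a - b = t *\<^sub>R v \<and> e = (F a + Q b) / t" if "e \<in> S v" for e v
    using that unfolding S_def by blast
  have Sne: "S v \<noteq> {}" for v
  proof -
    have "(F 0 + Q (-v)) / 1 \<in> S v" by (rule SI) (use D0 in auto)
    thus ?thesis by blast
  qed
  have Slb: "- Q v \<le> e" if ev: "e \<in> S v" for e v
  proof -
    obtain t a b where "t > 0" "a \<in> D" "a - b = t *\<^sub>R v" "e = (F a + Q b) / t"
      using SE[OF ev] by blast
    thus ?thesis using LB by blast
  qed
  have bdd: "bdd_below (S v)" for v
    unfolding bdd_below_def using Slb by blast
  have d_le: "d v \<le> e" if "e \<in> S v" for v e
    unfolding d_def using cInf_lower[OF that bdd] .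
  have d_ge: "- Q v \<le> d v" for v
    unfolding d_def by (rule cInf_greatest[OF Sne Slb])
  have d_F: "d a \<le> F a" if "a \<in> D" for a
  proof -
    have "(F a + Q 0) / 1 \<in> S a" using SI[where v=a and t=1 and a=a and b=0] that by simp
    thus ?thesis using d_le Q0 by fastforce
  qed
  have d_Q: "d (-h) \<le> Q h" for h
  proof -
    have "(F 0 + Q h) / 1 \<in> S (-h)" using SI[where v="-h" and t=1 and a=0 and b=h] D0 by simp
    thus ?thesis using d_le F0 by fastforce
  qed
  have sd: "sublin d"
    unfolding sublin_def
  proof (intro conjI allI impI)
    fix x y
    have key: "d (x + y) \<le> e1 + e2" if e1: "e1 \<in> S x" and e2: "e2 \<in> S y" for e1 e2
    proof -
      obtain t1 a1 b1 where 1: "t1 > 0" "a1 \<in> D" "a1 - b1 = t1 *\<^sub>R x" "e1 = (F a1 + Q b1) / t1"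
        using SE[OF e1] by blast
      obtain t2 a2 b2 where 2: "t2 > 0" "a2 \<in> D" "a2 - b2 = t2 *\<^sub>R y" "e2 = (F a2 + Q b2) / t2"
        using SE[OF e2] by blast
      define th where "th = t1 / (t1 + t2)"
      define T where "T = t1 * t2 / (t1 + t2)"
      have th0: "0 \<le> th" "th \<le> 1" using 1 2 unfolding th_def by auto
      have T0: "T > 0" using 1 2 unfolding T_def by simp
      define a where "a = (1 - th) *\<^sub>R a1 + th *\<^sub>R a2"
      define b where "b = (1 - th) *\<^sub>R b1 + th *\<^sub>R b2"
      have aD: "a \<in> D" unfolding a_def using convexD_alt[OF cD 1(2) 2(2) th0] by (simp add: algebra_simps)
      have c1: "(1 - th) * t1 = T" "th * t2 = T" using 1 2 unfolding th_def T_def by (simp_all add: field_simps)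
      have "a - b = (1 - th) *\<^sub>R (a1 - b1) + th *\<^sub>R (a2 - b2)"
        unfolding a_def b_def by (simp add: algebra_simps)
      also have "\<dots> = ((1 - th) * t1) *\<^sub>R x + (th * t2) *\<^sub>R y" using 1(3) 2(3) by simp
      also have "\<dots> = T *\<^sub>R (x + y)" using c1 by (simp add: scaleR_add_right)
      finally have abT: "a - b = T *\<^sub>R (x + y)" .
      have Fa: "F a \<le> (1 - th) * F a1 + th * F a2" unfolding a_def by (rule convex_onD[OF cF th0 1(2) 2(2)])
      have Qb: "Q b \<le> (1 - th) * Q b1 + th * Q b2" unfolding b_def by (rule convex_onD[OF cQ th0]) auto
      have "d (x + y) \<le> (F a + Q b) / T" using d_le[OF SI[OF T0 aD abT]] .
      also have "\<dots> \<le> ((1 - th) * (F a1 + Q b1) + th * (F a2 + Q b2)) / T"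
      proof (rule divide_right_mono)
        show "F a + Q b \<le> (1 - th) * (F a1 + Q b1) + th * (F a2 + Q b2)"
          using Fa Qb by (simp add: algebra_simps)
      qed (use T0 in simp)
      also have "\<dots> = ((1 - th) / T) * (F a1 + Q b1) + (th / T) * (F a2 + Q b2)"
        by (simp add: add_divide_distrib)
      also have "(1 - th) / T = 1 / t1" using c1 1 T0 by (simp add: field_simps)
      also have "th / T = 1 / t2" using c1 2 T0 by (simp add: field_simps)
      finally show ?thesis using 1(4) 2(4) by simp
    qed
    have A1: "d (x + y) - e2 \<le> d x" if e2: "e2 \<in> S y" for e2
      unfolding d_def[of x]
    proof (rule cInf_greatest)
      show "S x \<noteq> {}" by (rule Sne)
    next
      fix e1 assume "e1 \<in> S x"
      from key[OF this e2] show "d (x + y) - e2 \<le> e1" by linarith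
    qed
    have "d (x + y) - d x \<le> d y"
      unfolding d_def[of y]
    proof (rule cInf_greatest)
      show "S y \<noteq> {}" by (rule Sne)
    next
      fix e2 assume "e2 \<in> S y"
      from A1[OF this] show "d (x + y) - d x \<le> e2" by linarith
    qed
    thus "d (x + y) \<le> d x + d y" by simp
  next
    fix c :: real and x assume c: "0 \<le> c"
    show "d (c *\<^sub>R x) = c * d x"
    proof (cases "c = 0")
      case True
      have "d 0 \<le> 0" using d_F[OF D0] F0 by simp
      moreover have "0 \<le> d 0" using d_ge[of 0] Q0 by simp
      ultimately show ?thesis using True by simp
    next
      case False
      hence cp: "c > 0" using c by simp
      have l1: "d (c *\<^sub>R x) / c \<le> d x"
        unfolding d_def[of x]
      proof (rule cInf_greatest)
        show "S x \<noteq> {}" by (rule Sne)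
      next
        fix e assume "e \<in> S x"
        then obtain t a b where tab: "t > 0" "a \<in> D" "a - b = t *\<^sub>R x" "e = (F a + Q b) / t"
          using SE by blast
        have "a - b = (t / c) *\<^sub>R (c *\<^sub>R x)" using tab(3) cp by simp
        hence "d (c *\<^sub>R x) \<le> (F a + Q b) / (t / c)" using tab cp by (intro d_le SI) auto
        also have "\<dots> = c * e" using tab(4) by simp
        finally show "d (c *\<^sub>R x) / c \<le> e" using cp by (simp add: field_simps)
      qed
      have l2: "c * d x \<le> d (c *\<^sub>R x)"
        unfolding d_def[of "c *\<^sub>R x"]
      proof (rule cInf_greatest)
        show "S (c *\<^sub>R x) \<noteq> {}" by (rule Sne)
      next
        fix e assume "e \<in> S (c *\<^sub>R x)"
        then obtain t a b where tab: "t > 0" "a \<in> D" "a - b = t *\<^sub>R (c *\<^sub>R x)" "e = (F a + Q b) / t"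
          using SE by blast
        have "a - b = (t * c) *\<^sub>R x" using tab(3) by simp
        hence "d x \<le> (F a + Q b) / (t * c)" using tab cp by (intro d_le SI) auto
        also have "\<dots> = e / c" using tab(4) by simp
        finally show "c * d x \<le> e" using cp by (simp add: field_simps)
      qed
      show ?thesis using l1 l2 cp by (simp add: field_simps)
    qed
  qed
  obtain l where l: "\<forall>x y. l (x+y) = l x + l y" "\<forall>c x. l (c *\<^sub>R x) = c * l x" "\<forall>x. l x \<le> d x"
    using HB1[OF sd] by blast
  have neg: "l (-h) = - l h" for h using l(2) by (metis scaleR_minus1_left mult_minus1)
  have lQ: "- l h \<le> Q h" for h using l(3) d_Q[of h] neg[of h] by (metis order_trans)
  have lF: "l a \<le> F a" if "a \<in> D" for a using l(3) d_F[OF that] by (metis order_trans)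
  have "\<bar>l h\<bar> \<le> M" if "norm h \<le> 1" for h
  proof -
    have "- l h \<le> M" using lQ[of h] QM that by (metis order_trans)
    moreover have "l h \<le> M" using lQ[of "-h"] neg[of h] QM that by (metis minus_minus norm_minus_cancel order_trans)
    ultimately show ?thesis by simp
  qed
  then obtain L :: "'a \<Rightarrow>\<^sub>L real" where "blinfun_apply L = l"
    using lin_bound[OF l(1) l(2), of M] by auto
  thus ?thesis using lQ lF by auto
qed



lemma inv_helper:
  fixes s k e :: real assumes "s > 0" "k > 0" "inverse s < e * k / 2" shows "1 / (k * s) < e / 2"
proof -
  have "1 / (k * s) = inverse s / k" by (simp add: field_simps)
  also have "\<dots> < (e * k / 2) / k" using assms(2,3) by (rule divide_strict_right_mono[rotated])
  also have "\<dots> = e / 2" using assms by simp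
  finally show ?thesis .
qed

lemma ekeland:
  fixes \<phi> :: "'a::banach \<Rightarrow> real"
  assumes nn: "\<forall>v. \<phi> v \<ge> 0"
    and lsc: "\<forall>w \<eta>. \<eta> > 0 \<longrightarrow> (\<exists>r>0. \<forall>v. dist v w < r \<longrightarrow> \<phi> w - \<eta> < \<phi> v)"
    and k: "k > 0"
  shows "\<exists>w. \<phi> w + k * dist w u \<le> \<phi> u \<and> (\<forall>v. v \<noteq> w \<longrightarrow> \<phi> w < \<phi> v + k * dist v w)"
proof -
  define S where "S y = {v. \<phi> v + k * dist v y \<le> \<phi> y}" for y
  have Srefl: "y \<in> S y" for y unfolding S_def by simp
  have Strans: "z \<in> S y" if "v \<in> S y" "z \<in> S v" for y v z
  proof -
    have "dist z y \<le> dist z v + dist v y" by (rule dist_triangle)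
    hence "k * dist z y \<le> k * dist z v + k * dist v y" using k by (simp add: distrib_left[symmetric])
    thus ?thesis using that unfolding S_def by auto
  qed
  have Sclosed: "w \<in> S z" if lim: "y \<longlonglongrightarrow> w" and ev: "\<forall>n\<ge>N. y n \<in> S z" for y w z N
  proof (rule ccontr)
    assume "w \<notin> S z"
    hence gt: "\<phi> w + k * dist w z > \<phi> z" unfolding S_def by simp
    define \<eta> where "\<eta> = (\<phi> w + k * dist w z - \<phi> z) / 2"
    have \<eta>: "\<eta> > 0" using gt unfolding \<eta>_def by simp
    obtain r where r: "r > 0" "\<forall>v. dist v w < r \<longrightarrow> \<phi> w - \<eta> < \<phi> v" using lsc \<eta> by blast
    have "min r (\<eta> / k) > 0" using r \<eta> k by simp
    then obtain M where M: "\<forall>n\<ge>M. dist (y n) w < min r (\<eta> / k)"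
      using lim unfolding lim_sequentially by blast
    define n where "n = max M N"
    have d: "dist (y n) w < r" "dist (y n) w < \<eta> / k" using M unfolding n_def by auto
    have "\<phi> w - \<eta> < \<phi> (y n)" using r(2) d(1) by blast
    moreover have "k * dist (y n) w < \<eta>" using d(2) k by (simp add: field_simps)
    moreover have "dist w z \<le> dist (y n) w + dist (y n) z" by (metis dist_commute dist_triangle)
    hence "k * dist w z \<le> k * dist (y n) w + k * dist (y n) z" using k by (simp add: distrib_left[symmetric])
    moreover have "y n \<in> S z" using ev unfolding n_def by simp
    hence "\<phi> (y n) + k * dist (y n) z \<le> \<phi> z" unfolding S_def by simp
    moreover have "2 * \<eta> = \<phi> w + k * dist w z - \<phi> z" unfolding \<eta>_def by simp
    ultimately show False by linarith
  qed
  have bddS: "bdd_below (\<phi> ` S y)" for y using nn unfolding bdd_below_def by blast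
  have step: "\<exists>v. v \<in> S x \<and> \<phi> v \<le> Inf (\<phi> ` S x) + 1 / real (Suc n)" for x n
  proof -
    have ne: "\<phi> ` S x \<noteq> {}" using Srefl by blast
    have "Inf (\<phi> ` S x) < Inf (\<phi> ` S x) + 1 / real (Suc n)" by simp
    then obtain e where "e \<in> \<phi> ` S x" "e < Inf (\<phi> ` S x) + 1 / real (Suc n)"
      using cInf_lessD[OF ne] by blast
    thus ?thesis by force
  qed
  obtain y where y0: "y 0 = u" and ys: "\<And>n. y (Suc n) \<in> S (y n)"
      and yinf: "\<And>n. \<phi> (y (Suc n)) \<le> Inf (\<phi> ` S (y n)) + 1 / real (Suc n)"
  proof -
    have "\<exists>f. \<forall>n. (n = 0 \<longrightarrow> f n = u) \<and> (f (Suc n) \<in> S (f n) \<and> \<phi> (f (Suc n)) \<le> Inf (\<phi> ` S (f n)) + 1 / real (Suc n))"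
      by (rule dependent_nat_choice) (use step in auto)
    thus ?thesis using that by blast
  qed
  have nest: "S (y m) \<subseteq> S (y n)" if "n \<le> m" for m n
    using that
  proof (induction m)
    case 0 thus ?case by simp
  next
    case (Suc m)
    show ?case
    proof (cases "n = Suc m")
      case True thus ?thesis by simp
    next
      case False
      hence "S (y m) \<subseteq> S (y n)" using Suc by simp
      moreover have "S (y (Suc m)) \<subseteq> S (y m)" using Strans ys by blast
      ultimately show ?thesis by blast
    qed
  qed
  have inS: "y m \<in> S (y n)" if "n \<le> m" for m n using nest[OF that] Srefl by blast
  have small: "k * dist z (y (Suc n)) \<le> 1 / real (Suc n)" if z: "z \<in> S (y (Suc n))" for z n
  proof -
    have "z \<in> S (y n)" using Strans[OF ys z] .
    hence "Inf (\<phi> ` S (y n)) \<le> \<phi> z" using cInf_lower[OF _ bddS] by blast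
    moreover have "\<phi> z + k * dist z (y (Suc n)) \<le> \<phi> (y (Suc n))" using z unfolding S_def by simp
    ultimately show ?thesis using yinf[of n] by linarith
  qed
  have small2: "dist z (y (Suc n)) \<le> 1 / (k * real (Suc n))" if "z \<in> S (y (Suc n))" for z n
  proof -
    have gen: "a \<le> 1 / (k * s)" if "k * a \<le> 1 / s" "s > 0" for a s :: real
    proof -
      have "k * a * s \<le> 1" using that by (simp add: le_divide_eq)
      thus ?thesis using that k by (simp add: le_divide_eq mult_ac)
    qed
    show ?thesis by (rule gen[OF small[OF that]]) simp
  qed
  have "Cauchy y"
    unfolding Cauchy_def
  proof (intro allI impI)
    fix e :: real assume e: "e > 0"
    obtain N where N: "inverse (real (Suc N)) < e * k / 2" using reals_Archimedean[of "e * k / 2"] e k by auto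
    have bnd: "dist (y m) (y (Suc N)) \<le> 1 / (k * real (Suc N))" if "m \<ge> Suc N" for m
      using small2[OF inS[OF that]] .
    have "1 / (k * real (Suc N)) < e / 2" using inv_helper[OF _ k N] by simp
    hence "\<forall>m\<ge>Suc N. \<forall>n\<ge>Suc N. dist (y m) (y n) < e"
    proof (intro allI impI)
      fix m n assume h: "1 / (k * real (Suc N)) < e / 2" "m \<ge> Suc N" "n \<ge> Suc N"
      have "dist (y m) (y n) \<le> dist (y m) (y (Suc N)) + dist (y n) (y (Suc N))" by (rule dist_triangle2)
      thus "dist (y m) (y n) < e" using bnd[OF h(2)] bnd[OF h(3)] h(1) by linarith
    qed
    thus "\<exists>M. \<forall>m\<ge>M. \<forall>n\<ge>M. dist (y m) (y n) < e" by blast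
  qed
  then obtain w where lim: "y \<longlonglongrightarrow> w" using Cauchy_convergent convergent_def by blast
  have wS: "w \<in> S (y n)" for n
    by (rule Sclosed[OF lim, of n]) (use inS in blast)
  have c1: "\<phi> w + k * dist w u \<le> \<phi> u" using wS[of 0] y0 unfolding S_def by simp
  have c2: "\<phi> w < \<phi> v + k * dist v w" if vw: "v \<noteq> w" for v
  proof (rule ccontr)
    assume "\<not> \<phi> w < \<phi> v + k * dist v w"
    hence vS: "v \<in> S w" unfolding S_def by simp
    have dpos: "dist v w > 0" using vw by simp
    obtain N where N: "inverse (real (Suc N)) < dist v w * k / 2"
      using reals_Archimedean[of "dist v w * k / 2"] dpos k by auto
    have "dist v (y (Suc N)) \<le> 1 / (k * real (Suc N))" using small2 Strans[OF wS vS] by blast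
    moreover have "dist w (y (Suc N)) \<le> 1 / (k * real (Suc N))" using small2 wS by blast
    moreover have "1 / (k * real (Suc N)) < dist v w / 2" using inv_helper[OF _ k N] by simp
    moreover have "dist v w \<le> dist v (y (Suc N)) + dist w (y (Suc N))" by (rule dist_triangle2)
    ultimately show False by linarith
  qed
  show ?thesis using c1 c2 by blast
qed



lemma G0_nm: "f \<in> Gamma0 \<Longrightarrow> f v \<noteq> -\<infinity>"
  unfolding Gamma0_def proper_fun_def by auto

lemma G0_cvx:
  assumes f: "f \<in> Gamma0" and a: "f a = ereal ra" and b: "f b = ereal rb" and t: "0 \<le> \<theta>" "\<theta> \<le> 1"
  shows "f ((1-\<theta>) *\<^sub>R a + \<theta> *\<^sub>R b) \<le> ereal ((1-\<theta>) * ra + \<theta> * rb)"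
proof -
  have c: "convex {(x, r::real). f x \<le> ereal r}" using f unfolding Gamma0_def convex_fun_def by blast
  have "(1-\<theta>) *\<^sub>R (a, ra) + \<theta> *\<^sub>R (b, rb) \<in> {(x, r::real). f x \<le> ereal r}"
    by (rule convexD[OF c]) (use a b t in auto)
  thus ?thesis by (simp add: scaleR_Pair)
qed

lemma lin_convex: "convex_on UNIV (\<lambda>u. blinfun_apply L (u - x))"
  unfolding convex_on_def
proof (intro conjI ballI allI impI)
  fix a b :: 'a and u v :: real assume uv: "0 \<le> u" "0 \<le> v" "u + v = 1"
  have "x = u *\<^sub>R x + v *\<^sub>R x" using uv by (simp flip: scaleR_add_left)
  hence "u *\<^sub>R a + v *\<^sub>R b - x = u *\<^sub>R (a - x) + v *\<^sub>R (b - x)" by (simp add: algebra_simps)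
  thus "blinfun_apply L (u *\<^sub>R a + v *\<^sub>R b - x) \<le> u * blinfun_apply L (a - x) + v * blinfun_apply L (b - x)"
    by (simp add: blinfun.add_right blinfun.scaleR_right)
qed simp

lemma Ptbwl_sub: "Ptbwl f \<epsilon> \<subseteq> Ptbw f \<epsilon>"
proof
  fix g assume "g \<in> Ptbwl f \<epsilon>"
  then obtain x L where x: "x \<in> Sfeq f" and L: "norm L \<le> \<epsilon>" and g: "g = (\<lambda>u. f u + ereal (blinfun_apply L (u - x)))"
    unfolding Ptbwl_def by blast
  have "x \<in> Sf g" using x unfolding g Sf_def Sfeq_def by simp
  moreover have "\<forall>u. \<bar>blinfun_apply L (u - x) - blinfun_apply L (x - x)\<bar> \<le> \<epsilon> * norm (u - x)"
  proof
    fix u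
    have "\<bar>blinfun_apply L (u - x)\<bar> \<le> norm L * norm (u - x)" using norm_blinfun[of L "u - x"] by simp
    also have "\<dots> \<le> \<epsilon> * norm (u - x)" using L by (simp add: mult_right_mono)
    finally show "\<bar>blinfun_apply L (u - x) - blinfun_apply L (x - x)\<bar> \<le> \<epsilon> * norm (u - x)" by simp
  qed
  ultimately show "g \<in> Ptbw f \<epsilon>"
    unfolding Ptbw_def using x lin_convex[of L x] g by blast
qed

lemma Ptbl_sub: "Ptbl f \<epsilon> \<subseteq> Ptb f \<epsilon>"
proof
  fix g assume "g \<in> Ptbl f \<epsilon>"
  then obtain x \<xi> L where x: "x \<in> Sfeq f" and xi: "\<xi> \<ge> 0" and L: "norm L \<le> \<xi>"
    and cond: "ereal \<xi> + bdmod f \<le> ereal \<epsilon> + tau f x \<xi> 0"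
    and g: "g = (\<lambda>u. f u + ereal (blinfun_apply L (u - x)))"
    unfolding Ptbl_def by blast
  have "x \<in> Sf g" using x unfolding g Sf_def Sfeq_def by simp
  moreover have "\<forall>u. \<bar>blinfun_apply L (u - x) - blinfun_apply L (x - x)\<bar> \<le> \<xi> * norm (u - x)"
  proof
    fix u
    have "\<bar>blinfun_apply L (u - x)\<bar> \<le> norm L * norm (u - x)" using norm_blinfun[of L "u - x"] by simp
    also have "\<dots> \<le> \<xi> * norm (u - x)" using L by (simp add: mult_right_mono)
    finally show "\<bar>blinfun_apply L (u - x) - blinfun_apply L (x - x)\<bar> \<le> \<xi> * norm (u - x)" by simp
  qed
  moreover have "ereal \<xi> + bdmod f \<le> ereal \<epsilon> + tau f x \<xi> \<bar>blinfun_apply L (x - x)\<bar>" using cond by simp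
  ultimately show "g \<in> Ptb f \<epsilon>"
    unfolding Ptb_def using x xi lin_convex[of L x] g by blast
qed

lemma ErF_mono: "A \<subseteq> B \<Longrightarrow> ErF B \<le> ErF A"
  unfolding ErF_def by (rule INF_superset_mono) auto



lemma part2:
  fixes f :: "'a::real_normed_vector \<Rightarrow> ereal"
  assumes f: "f \<in> Gamma0" and pos: "ErF (Ptbwl f \<epsilon>) > 0"
  shows "ereal \<epsilon> \<le> bdmod f"
proof (rule ccontr)
  assume "\<not> ereal \<epsilon> \<le> bdmod f"
  hence lt: "bdmod f < ereal \<epsilon>" by simp
  obtain \<rho> where \<rho>: "0 < ereal \<rho>" "ereal \<rho> < ErF (Ptbwl f \<epsilon>)" using ereal_dense2[OF pos] by blast
  hence \<rho>0: "\<rho> > 0" by simp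
  obtain x where x: "x \<in> Sfeq f" and dx: "dst 0 (frontier (subdiff f x)) < ereal \<epsilon>"
    using lt unfolding bdmod_def by (auto simp: INF_less_iff)
  obtain y where yf: "y \<in> frontier (subdiff f x)" and ny: "ereal (norm (y - 0)) < ereal \<epsilon>"
    using dx unfolding dst_def by (auto simp: INF_less_iff)
  have ny': "norm y < \<epsilon>" using ny by simp
  have fx: "f x = 0" using x unfolding Sfeq_def by simp
  have SD: "subdiff f x = {xs. \<forall>u. ereal (blinfun_apply xs (u - x)) \<le> f u}"
    unfolding subdiff_def using fx by simp
  define r where "r = min ((\<epsilon> - norm y) / 3) (\<rho> / 4)"
  have r0: "r > 0" unfolding r_def using ny' \<rho>0 by simp
  have yc: "y \<in> closure (subdiff f x)" and yi: "y \<notin> interior (subdiff f x)"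
    using yf unfolding frontier_def by auto
  obtain y' where y': "y' \<in> subdiff f x" "dist y' y < r" using yc r0 unfolding closure_approachable by blast
  have "\<not> ball y r \<subseteq> subdiff f x" using yi r0 unfolding mem_interior by blast
  then obtain z where z: "dist y z < r" "z \<notin> subdiff f x" by (auto simp: subset_eq)
  obtain v where v: "\<not> ereal (blinfun_apply z (v - x)) \<le> f v" using z(2) unfolding SD by blast
  have y'le: "\<And>u. ereal (blinfun_apply y' (u - x)) \<le> f u" using y'(1) unfolding SD by blast
  have "f v \<noteq> \<infinity>" using v by auto
  moreover have "f v \<noteq> -\<infinity>" using G0_nm[OF f] .
  ultimately obtain fv where fv: "f v = ereal fv" by (cases "f v") auto
  define w where "w = z - y'"
  define L where "L = w - y'"
  have nw: "norm w < 2 * r"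
  proof -
    have "norm w = dist z y'" unfolding w_def by (simp add: dist_norm)
    also have "\<dots> \<le> dist z y + dist y y'" by (rule dist_triangle)
    finally show ?thesis using z(1) y'(2) by (simp add: dist_commute)
  qed
  have ny'': "norm y' < norm y + r"
  proof -
    have "norm y' \<le> norm y + norm (y' - y)" by (metis add.commute diff_add_cancel norm_triangle_ineq)
    thus ?thesis using y'(2) by (simp add: dist_norm)
  qed
  have nL: "norm L \<le> \<epsilon>"
  proof -
    have "norm L \<le> norm w + norm y'" unfolding L_def by (rule norm_triangle_ineq4)
    also have "\<dots> \<le> norm y + 3 * r" using nw ny'' by simp
    also have "\<dots> \<le> \<epsilon>"
    proof -
      have "r \<le> (\<epsilon> - norm y) / 3" unfolding r_def by (rule min.cobounded1)
      hence "3 * r \<le> \<epsilon> - norm y" by (simp add: field_simps)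
      thus ?thesis by linarith
    qed
    finally show ?thesis .
  qed
  define g where "g = (\<lambda>u. f u + ereal (blinfun_apply L (u - x)))"
  have gP: "g \<in> Ptbwl f \<epsilon>" unfolding Ptbwl_def g_def using x nL by blast
  define a where "a = blinfun_apply w (v - x)"
  define h where "h = fv - blinfun_apply y' (v - x)"
  have h0: "h \<ge> 0" using y'le[of v] fv unfolding h_def by simp
  have ha: "h < a"
  proof -
    have "fv < blinfun_apply z (v - x)" using v fv by simp
    thus ?thesis unfolding h_def a_def w_def by (simp add: blinfun.diff_left)
  qed
  have a0: "a > 0" using h0 ha by simp
  have gv: "g v = ereal (h + a)"
    unfolding g_def fv h_def a_def L_def by (simp add: blinfun.diff_left)
  have w0: "norm w > 0"
  proof (rule ccontr)
    assume "\<not> norm w > 0"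
    hence "w = 0" by simp
    thus False using a0 unfolding a_def by simp
  qed
  have xS: "x \<in> Sf g" unfolding Sf_def g_def using fx by simp
  have Sdist: "a / norm w \<le> norm (u - v)" if u: "u \<in> Sf g" for u
  proof -
    have gu: "f u + ereal (blinfun_apply L (u - x)) \<le> 0" using u unfolding Sf_def g_def by simp
    have "f u \<noteq> \<infinity>" using gu by auto
    moreover have "f u \<noteq> -\<infinity>" using G0_nm[OF f] .
    ultimately obtain fu where fu: "f u = ereal fu" by (cases "f u") auto
    have "fu + blinfun_apply L (u - x) \<le> 0" using gu fu by simp
    moreover have "blinfun_apply y' (u - x) \<le> fu" using y'le[of u] fu by simp
    ultimately have wu: "blinfun_apply w (u - x) \<le> 0" unfolding L_def by (simp add: blinfun.diff_left)
    have "blinfun_apply w (v - x) - blinfun_apply w (u - x) = blinfun_apply w (v - u)"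
      by (simp add: blinfun.diff_right)
    also have "\<dots> \<le> norm w * norm (v - u)" using norm_blinfun[of w "v - u"] by simp
    finally have "a \<le> norm w * norm (u - v)" using wu unfolding a_def by (simp add: norm_minus_commute)
    thus ?thesis using w0 by (simp add: divide_le_eq mult.commute)
  qed
  have dlow: "ereal (a / norm w) \<le> dst v (Sf g)"
    unfolding dst_def by (rule INF_greatest) (use Sdist in simp)
  have dup: "dst v (Sf g) \<le> ereal (norm (x - v))"
    unfolding dst_def by (rule INF_lower2[OF xS]) simp
  obtain D where D: "dst v (Sf g) = ereal D" "a / norm w \<le> D"
    using dlow dup by (cases "dst v (Sf g)") auto
  have Dpos: "D > 0" using D(2) a0 w0 by (smt (verit) divide_pos_pos)
  have "Er g \<le> g v / dst v (Sf g)"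
    unfolding Er_def by (rule INF_lower) (use gv a0 h0 in simp)
  also have "\<dots> = ereal ((h + a) / D)" using gv D(1) Dpos by simp
  also have "(h + a) / D \<le> 2 * a / D" using ha Dpos by (simp add: divide_right_mono)
  also have "2 * a / D \<le> 2 * a / (a / norm w)"
  proof (rule divide_left_mono)
    show "a / norm w \<le> D" using D(2) .
    show "0 \<le> 2 * a" using a0 by simp
    show "0 < D * (a / norm w)" using Dpos a0 w0 by simp
  qed
  also have "2 * a / (a / norm w) = 2 * norm w" using a0 by simp
  also have "2 * norm w < \<rho>"
  proof -
    have "r \<le> \<rho> / 4" unfolding r_def by (rule min.cobounded2)
    hence "4 * r \<le> \<rho>" by (simp add: field_simps)
    thus ?thesis using nw by linarith
  qed
  finally have "Er g < ereal \<rho>" by simp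
  moreover have "ErF (Ptbwl f \<epsilon>) \<le> Er g" unfolding ErF_def by (rule INF_lower[OF gP])
  ultimately show False using \<rho>(2) by simp
qed



lemma ratio_ge:
  fixes A D :: ereal
  assumes c: "c > 0" and A: "0 < A" and D: "0 \<le> D" "D \<noteq> \<infinity>" and le: "A \<noteq> \<infinity> \<Longrightarrow> ereal c * D \<le> A"
  shows "ereal c \<le> A / D"
proof -
  obtain d where d: "D = ereal d" "d \<ge> 0" using D by (cases D) auto
  show ?thesis
  proof (cases "A = \<infinity>")
    case True
    show ?thesis
    proof (cases "d = 0")
      case True thus ?thesis using \<open>A = \<infinity>\<close> d by simp
    next
      case False thus ?thesis using \<open>A = \<infinity>\<close> d by simp
    qed
  next
    case False
    then obtain a where a: "A = ereal a" "a > 0" using A by (cases A) auto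
    have le': "c * d \<le> a" using le False a d by simp
    show ?thesis
    proof (cases "d = 0")
      case True thus ?thesis using a d by simp
    next
      case False
      hence dp: "d > 0" using d by simp
      have "c \<le> a / d" using le' dp by (simp add: le_divide_eq mult.commute)
      thus ?thesis using a d dp by simp
    qed
  qed
qed

lemma p_loclip:
  fixes p :: "'a::real_normed_vector \<Rightarrow> real"
  assumes cp: "convex_on UNIV p" and lip: "\<forall>u. \<bar>p u - p x\<bar> \<le> \<xi> * norm (u - x)" and xi: "\<xi> \<ge> 0"
  shows "\<exists>M\<ge>0. \<forall>h. norm h \<le> 1 \<longrightarrow> \<bar>p (w + h) - p w\<bar> \<le> M * norm h"
proof -
  define M where "M = \<bar>p x\<bar> + \<xi> * (norm (w - x) + 1) + \<bar>p w\<bar>"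
  have M0: "M \<ge> 0" unfolding M_def using xi by simp
  have up: "p (w + e) \<le> \<bar>p x\<bar> + \<xi> * (norm (w - x) + 1)" if "norm e = 1" for e
  proof -
    have "p (w + e) \<le> p x + \<xi> * norm (w + e - x)" using lip[rule_format, of "w + e"] by linarith
    moreover have "norm (w + e - x) \<le> norm (w - x) + 1"
      using norm_triangle_ineq[of "w - x" e] that by (simp add: algebra_simps)
    ultimately show ?thesis using xi by (smt (verit) mult_left_mono)
  qed
  have one: "p (w + h) - p w \<le> M * norm h" if "norm h \<le> 1" for h
  proof (cases "h = 0")
    case True thus ?thesis by simp
  next
    case False
    define s where "s = norm h"
    have s: "0 < s" "s \<le> 1" using False that unfolding s_def by auto
    define e where "e = (1 / s) *\<^sub>R h"
    have ne: "norm e = 1" unfolding e_def s_def using False by simp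
    have eq: "w + h = (1 - s) *\<^sub>R w + s *\<^sub>R (w + e)"
      unfolding e_def using s by (simp add: algebra_simps)
    have "p (w + h) \<le> (1 - s) * p w + s * p (w + e)"
      unfolding eq by (rule convex_onD[OF cp]) (use s in auto)
    hence "p (w + h) - p w \<le> s * (p (w + e) - p w)" by (simp add: algebra_simps)
    also have "\<dots> \<le> s * M" using up[OF ne] s unfolding M_def by (intro mult_left_mono) auto
    finally show ?thesis unfolding s_def by (simp add: mult.commute)
  qed
  have "\<bar>p (w + h) - p w\<bar> \<le> M * norm h" if "norm h \<le> 1" for h
  proof -
    have a: "p (w + h) - p w \<le> M * norm h" using one that by blast
    have b: "p (w + - h) - p w \<le> M * norm h" using one[of "-h"] that by simp
    have "p w \<le> (1/2) * p (w + h) + (1/2) * p (w + - h)"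
    proof -
      have hw: "(1/2::real) *\<^sub>R w + (1/2) *\<^sub>R w = w" by (simp flip: scaleR_add_left)
      have "w = (1 - 1/2) *\<^sub>R (w + h) + (1/2) *\<^sub>R (w + - h)"
      proof -
        have "(1 - 1/2::real) *\<^sub>R (w + h) + (1/2) *\<^sub>R (w + - h) = (1/2::real) *\<^sub>R w + (1/2) *\<^sub>R w"
          by (simp add: algebra_simps)
        thus ?thesis using hw by simp
      qed
      hence "p w = p ((1 - 1/2) *\<^sub>R (w + h) + (1/2) *\<^sub>R (w + - h))" by simp
      also have "\<dots> \<le> (1 - 1/2) * p (w + h) + (1/2) * p (w + - h)"
        by (rule convex_onD[OF cp]) auto
      finally show ?thesis by simp
    qed
    thus ?thesis using a b by linarith
  qed
  thus ?thesis using M0 by blast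
qed

lemma g_lsc:
  fixes f :: "'a::real_normed_vector \<Rightarrow> ereal" and p :: "'a \<Rightarrow> real"
  assumes f: "f \<in> Gamma0" and cp: "convex_on UNIV p" and lip: "\<forall>u. \<bar>p u - p x\<bar> \<le> \<xi> * norm (u - x)" and xi: "\<xi> \<ge> 0"
    and lt: "c' < f w + ereal (p w)"
  shows "\<exists>r>0. \<forall>v. dist v w < r \<longrightarrow> c' < f v + ereal (p v)"
proof (cases c')
  case MInf
  have "c' < f v + ereal (p v)" for v
    using G0_nm[OF f, of v] MInf by (cases "f v") auto
  thus ?thesis by (intro exI[of _ 1]) auto
next
  case PInf thus ?thesis using lt by simp
next
  case (real cr)
  have "ereal (cr - p w) < f w" using lt real by (cases "f w") auto
  then obtain e where e: "ereal (cr - p w) < ereal e" "ereal e < f w" using ereal_dense2 by blast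
  define \<eta> where "\<eta> = e - (cr - p w)"
  have \<eta>: "\<eta> > 0" using e(1) unfolding \<eta>_def by simp
  have lf: "lsc_fun f" using f unfolding Gamma0_def by blast
  have "\<forall>\<^sub>F u in at w. ereal e < f u" using lf e(2) unfolding lsc_fun_def by blast
  then obtain r1 where r1: "r1 > 0" "\<forall>u. u \<noteq> w \<and> dist u w < r1 \<longrightarrow> ereal e < f u"
    unfolding eventually_at by auto
  obtain M where M: "M \<ge> 0" "\<forall>h. norm h \<le> 1 \<longrightarrow> \<bar>p (w + h) - p w\<bar> \<le> M * norm h"
    using p_loclip[OF cp lip xi] by blast
  define r where "r = min r1 (min 1 (\<eta> / (M + 1)))"
  have r0: "r > 0" unfolding r_def using r1 \<eta> M by simp
  have "c' < f v + ereal (p v)" if dv: "dist v w < r" for v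
  proof (cases "v = w")
    case True thus ?thesis using lt by simp
  next
    case False
    have fv: "ereal e < f v" using r1(2) False dv unfolding r_def by simp
    have nh: "norm (v - w) \<le> 1" using dv unfolding r_def by (simp add: dist_norm)
    have "\<bar>p (w + (v - w)) - p w\<bar> \<le> M * norm (v - w)" using M(2) nh by blast
    hence pv1: "\<bar>p v - p w\<bar> \<le> M * norm (v - w)" by simp
    have "norm (v - w) < \<eta> / (M + 1)" using dv unfolding r_def by (simp add: dist_norm)
    hence "(M + 1) * norm (v - w) < \<eta>" using M(1) by (simp add: field_simps)
    moreover have "M * norm (v - w) \<le> (M + 1) * norm (v - w)" by (simp add: distrib_right)
    ultimately have pv: "p v > p w - \<eta>" using pv1 by linarith
    have "ereal cr < ereal e + ereal (p v)" using pv unfolding \<eta>_def by simp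
    also have "\<dots> \<le> f v + ereal (p v)" using fv by (intro add_right_mono) simp
    finally show ?thesis using real by simp
  qed
  thus ?thesis using r0 by blast
qed



lemma ball_in:
  fixes S :: "('a::real_normed_vector \<Rightarrow>\<^sub>L real) set"
  assumes i: "0 \<in> interior S" and y: "ereal (norm y) < dst 0 (frontier S)"
  shows "y \<in> S"
proof (rule ccontr)
  assume yS: "y \<notin> S"
  have "connected (closed_segment 0 y)" by (simp add: convex_connected)
  moreover have "closed_segment 0 y \<inter> S \<noteq> {}" using i interior_subset by fastforce
  moreover have "closed_segment 0 y - S \<noteq> {}" using yS by auto
  ultimately obtain z where z: "z \<in> closed_segment 0 y" "z \<in> frontier S"
    using connected_Int_frontier by blast
  have "norm z \<le> norm y" using segment_bound1[OF z(1)] by simp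
  moreover have "dst 0 (frontier S) \<le> ereal (norm (z - 0))"
    unfolding dst_def by (rule INF_lower[OF z(2)])
  ultimately show False using y by (metis diff_zero ereal_less_eq(3) leD order_le_less_trans)
qed

lemma keyA:
  fixes f :: "'a::real_normed_vector \<Rightarrow> ereal" and p :: "'a \<Rightarrow> real"
  assumes f: "f \<in> Gamma0" and fx: "f x = 0" and cp: "convex_on UNIV p"
    and lip: "\<forall>u. \<bar>p u - p x\<bar> \<le> \<xi> * norm (u - x)" and xi: "\<xi> \<ge> 0"
    and int: "0 \<in> interior (subdiff f x)" and c0: "c0 > 0"
    and T: "ereal (\<xi> + c0) \<le> dst 0 (frontier (subdiff f x))"
    and SG: "Sf (\<lambda>u. f u + ereal (p u)) \<noteq> {}"
    and u: "0 < f u + ereal (p u)" "f u + ereal (p u) \<noteq> \<infinity>"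
  shows "ereal (c0/2) * dst u (Sf (\<lambda>u. f u + ereal (p u))) \<le> f u + ereal (p u)"
proof -
  define g where "g = (\<lambda>u. f u + ereal (p u))"
  define c where "c = c0 / 2"
  define \<rho> where "\<rho> = \<xi> + c"
  have c: "c > 0" unfolding c_def using c0 by simp
  have SD: "subdiff f x = {xs. \<forall>u. ereal (blinfun_apply xs (u - x)) \<le> f u}"
    unfolding subdiff_def using fx by simp
  have grow: "ereal (\<rho> * norm (v - x)) \<le> f v" for v
  proof (cases "v = x")
    case True thus ?thesis using fx by simp
  next
    case False
    obtain L :: "'a \<Rightarrow>\<^sub>L real" where L: "norm L \<le> 1" "blinfun_apply L (v - x) = norm (v - x)"
      using norming by blast
    have "norm (\<rho> *\<^sub>R L) \<le> \<rho>" using L(1) xi c unfolding \<rho>_def by (simp add: mult_left_le)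
    also have "\<rho> < \<xi> + c0" unfolding \<rho>_def c_def using c0 by simp
    finally have "ereal (norm (\<rho> *\<^sub>R L)) < ereal (\<xi> + c0)" by simp
    hence "ereal (norm (\<rho> *\<^sub>R L)) < dst 0 (frontier (subdiff f x))"
      using T by (rule order_less_le_trans)
    hence "\<rho> *\<^sub>R L \<in> subdiff f x" using ball_in[OF int] by blast
    hence "ereal (blinfun_apply (\<rho> *\<^sub>R L) (v - x)) \<le> f v" unfolding SD by blast
    moreover have "blinfun_apply (\<rho> *\<^sub>R L) (v - x) = \<rho> * norm (v - x)"
      using L(2) by (simp add: blinfun.scaleR_left)
    ultimately show ?thesis by simp
  qed
  have gg: "ereal (c * norm (v - x) + p x) \<le> g v" for v
  proof -
    have "p v \<ge> p x - \<xi> * norm (v - x)" using lip[rule_format, of v] by linarith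
    hence "ereal (c * norm (v - x) + p x) \<le> ereal (\<rho> * norm (v - x)) + ereal (p v)"
      unfolding \<rho>_def by (simp add: algebra_simps)
    also have "\<dots> \<le> g v" unfolding g_def using grow[of v] by (intro add_right_mono) auto
    finally show ?thesis .
  qed
  obtain z0 where z0: "z0 \<in> Sf g" using SG unfolding g_def by blast
  have px: "p x \<le> 0"
  proof -
    have "g z0 \<le> 0" using z0 unfolding Sf_def by simp
    hence "ereal (c * norm (z0 - x) + p x) \<le> 0" using gg[of z0] by (rule order_trans[rotated])
    hence "c * norm (z0 - x) + p x \<le> 0" by simp
    moreover have "c * norm (z0 - x) \<ge> 0" using c by simp
    ultimately show ?thesis by linarith
  qed
  have "f u \<noteq> \<infinity>" using u(2) by auto
  moreover have "f u \<noteq> -\<infinity>" using G0_nm[OF f] .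
  ultimately obtain fu where fu: "f u = ereal fu" by (cases "f u") auto
  define G where "G = fu + p u"
  have gu: "g u = ereal G" unfolding g_def G_def fu by simp
  have G0: "G > 0" using u(1) gu unfolding g_def by simp
  define a where "a = - p x"
  have a0: "a \<ge> 0" using px unfolding a_def by simp
  define s where "s = a / (a + G)"
  have s: "0 \<le> s" "s \<le> 1" unfolding s_def using a0 G0 by auto
  define z where "z = (1 - s) *\<^sub>R x + s *\<^sub>R u"
  have fz: "f z \<le> ereal ((1 - s) * 0 + s * fu)"
    unfolding z_def by (rule G0_cvx[OF f _ fu s]) (simp add: fx zero_ereal_def)
  have pz: "p z \<le> (1 - s) * p x + s * p u"
    unfolding z_def by (rule convex_onD[OF cp s]) auto
  have "(1 - s) * p x + s * G = 0"
  proof -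
    have "(1 - s) = G / (a + G)" unfolding s_def using a0 G0 by (simp add: field_simps)
    thus ?thesis unfolding s_def a_def using a0 G0 by (simp add: field_simps)
  qed
  hence "g z \<le> 0"
  proof -
    assume e: "(1 - s) * p x + s * G = 0"
    have "g z \<le> ereal (s * fu) + ereal (p z)" unfolding g_def using fz by (intro add_right_mono) auto
    also have "\<dots> \<le> ereal (s * fu + ((1 - s) * p x + s * p u))" using pz by simp
    also have "s * fu + ((1 - s) * p x + s * p u) = (1 - s) * p x + s * G" unfolding G_def by (simp add: algebra_simps)
    finally show ?thesis using e by (simp add: zero_ereal_def)
  qed
  hence zS: "z \<in> Sf g" unfolding Sf_def by simp
  have nz: "norm (z - u) = G / (a + G) * norm (u - x)"
  proof -
    have "z - u = (1 - s) *\<^sub>R (x - u)" unfolding z_def by (simp add: algebra_simps)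
    moreover have "(1 - s) = G / (a + G)" unfolding s_def using a0 G0 by (simp add: field_simps)
    ultimately show ?thesis using a0 G0 by (simp add: norm_minus_commute)
  qed
  have dle: "dst u (Sf g) \<le> ereal (G / (a + G) * norm (u - x))"
    unfolding dst_def using nz by (intro INF_lower2[OF zS]) simp
  have "G \<ge> c * norm (u - x) - a" using gg[of u] gu unfolding a_def by simp
  hence "c * (G / (a + G) * norm (u - x)) \<le> G"
  proof -
    assume h: "G \<ge> c * norm (u - x) - a"
    have apg: "a + G > 0" using a0 G0 by simp
    have "c * (G / (a + G) * norm (u - x)) = G * (c * norm (u - x)) / (a + G)" by (simp add: field_simps)
    also have "\<dots> \<le> G * (a + G) / (a + G)"
      using h G0 apg by (intro divide_right_mono mult_left_mono) auto
    also have "\<dots> = G" using apg by simp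
    finally show ?thesis .
  qed
  hence "ereal c * dst u (Sf g) \<le> ereal G"
  proof -
    assume h: "c * (G / (a + G) * norm (u - x)) \<le> G"
    have "ereal c * dst u (Sf g) \<le> ereal c * ereal (G / (a + G) * norm (u - x))"
      by (rule ereal_mult_left_mono[OF dle]) (use c in simp)
    also have "\<dots> = ereal (c * (G / (a + G) * norm (u - x)))" by simp
    also have "\<dots> \<le> ereal G" using h by simp
    finally show ?thesis .
  qed
  thus ?thesis unfolding c_def g_def using gu unfolding g_def by simp
qed



lemma lim_bound:
  fixes X A Y :: real
  assumes h: "\<forall>t>0. X \<le> A / t + Y"
  shows "X \<le> Y"
proof (rule ccontr)
  assume "\<not> X \<le> Y"
  hence d: "X - Y > 0" by simp
  define t where "t = (\<bar>A\<bar> + 1) / (X - Y)"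
  have t: "t > 0" unfolding t_def using d by simp
  have "A / t \<le> \<bar>A\<bar> / t" using t by (simp add: divide_right_mono)
  also have "\<bar>A\<bar> / t = \<bar>A\<bar> * (X - Y) / (\<bar>A\<bar> + 1)" unfolding t_def using d by simp
  also have "\<dots> < X - Y"
  proof -
    have "\<bar>A\<bar> * (X - Y) < (\<bar>A\<bar> + 1) * (X - Y)" using d by (simp add: distrib_right)
    moreover have p: "\<bar>A\<bar> + 1 > 0" by simp
    ultimately show ?thesis unfolding pos_divide_less_eq[OF p] by (simp add: mult.commute)
  qed
  finally show False using h[rule_format, OF t] by linarith
qed

lemma keyB:
  fixes f :: "'a::banach \<Rightarrow> ereal" and p :: "'a \<Rightarrow> real"
  assumes f: "f \<in> Gamma0" and cp: "convex_on UNIV p"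
    and lip: "\<forall>u. \<bar>p u - p x\<bar> \<le> \<xi> * norm (u - x)" and xi: "\<xi> \<ge> 0" and c: "c > 0"
    and u: "0 < f u + ereal (p u)" "f u + ereal (p u) = ereal G"
    and far: "\<forall>z\<in>Sf (\<lambda>u. f u + ereal (p u)). G / c < norm (z - u)"
  shows "\<exists>w L. L \<in> subdiff f w \<and> norm L \<le> \<xi> + c \<and> ereal (- \<xi> * norm (w - x) - \<bar>p x\<bar>) \<le> f w"
proof -
  define g where "g = (\<lambda>u. f u + ereal (p u))"
  have gnm: "g v \<noteq> -\<infinity>" for v unfolding g_def using G0_nm[OF f, of v] by (cases "f v") auto
  have gfin: "g v = ereal r \<Longrightarrow> f v = ereal (r - p v)" for v r
    unfolding g_def using G0_nm[OF f, of v] by (cases "f v") auto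
  have G0: "G > 0" using u by simp
  have glsc: "\<exists>r>0. \<forall>v. dist v w < r \<longrightarrow> c' < g v" if "c' < g w" for w c'
    using g_lsc[OF f cp lip xi, of c' w] that unfolding g_def by blast
  define \<phi> where "\<phi> v = (if g v \<le> 0 then 0 else if ereal G \<le> g v then G else real_of_ereal (g v))" for v
  have \<phi>nn: "\<phi> v \<ge> 0" for v
  proof -
    have "0 < g v \<Longrightarrow> g v < ereal G \<Longrightarrow> 0 \<le> real_of_ereal (g v)"
      using gnm[of v] by (cases "g v") auto
    thus ?thesis unfolding \<phi>_def using G0 by auto
  qed
  have \<phi>le: "0 < g v \<Longrightarrow> ereal (\<phi> v) \<le> g v" for v
    unfolding \<phi>_def using gnm[of v] by (cases "g v") auto
  have \<phi>G: "\<phi> v \<le> G" for v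
  proof -
    have "0 < g v \<Longrightarrow> g v < ereal G \<Longrightarrow> real_of_ereal (g v) \<le> G"
      using gnm[of v] by (cases "g v") auto
    thus ?thesis unfolding \<phi>_def using G0 by auto
  qed
  have \<phi>lsc: "\<forall>w \<eta>. \<eta> > 0 \<longrightarrow> (\<exists>r>0. \<forall>v. dist v w < r \<longrightarrow> \<phi> w - \<eta> < \<phi> v)"
  proof (intro allI impI)
    fix w and \<eta> :: real assume \<eta>: "\<eta> > 0"
    show "\<exists>r>0. \<forall>v. dist v w < r \<longrightarrow> \<phi> w - \<eta> < \<phi> v"
    proof (cases "\<phi> w - \<eta> < 0")
      case True
      have "\<forall>v. \<phi> w - \<eta> < \<phi> v" using True \<phi>nn by (meson less_le_trans)
      thus ?thesis using zero_less_one by blast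
    next
      case False
      hence pw: "\<phi> w > 0" using \<eta> by simp
      hence gw: "g w > 0" unfolding \<phi>_def by (auto split: if_splits)
      have "ereal (\<phi> w - \<eta>) < g w"
      proof -
        have "ereal (\<phi> w - \<eta>) < ereal (\<phi> w)" using \<eta> by simp
        thus ?thesis using \<phi>le[OF gw] by (rule less_le_trans)
      qed
      then obtain r where r: "r > 0" "\<forall>v. dist v w < r \<longrightarrow> ereal (\<phi> w - \<eta>) < g v" using glsc by blast
      have "\<phi> w - \<eta> < \<phi> v" if "dist v w < r" for v
      proof -
        have gv: "ereal (\<phi> w - \<eta>) < g v" using r that by blast
        have "ereal 0 \<le> ereal (\<phi> w - \<eta>)" using False by simp
        hence gv0: "0 < g v" using gv unfolding zero_ereal_def by (rule le_less_trans)
        show ?thesis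
        proof (cases "ereal G \<le> g v")
          case True
          have "\<phi> v = G" unfolding \<phi>_def using gv0 True by simp
          thus ?thesis using \<phi>G[of w] \<eta> by simp
        next
          case False
          then obtain rv where rv: "g v = ereal rv" using gnm[of v] by (cases "g v") auto
          hence "\<phi> v = rv" unfolding \<phi>_def using gv0 False by simp
          thus ?thesis using gv rv by simp
        qed
      qed
      thus ?thesis using r(1) by blast
    qed
  qed
  have \<phi>u: "\<phi> u = G" unfolding \<phi>_def g_def using u G0 by auto
  obtain w where w1: "\<phi> w + c * dist w u \<le> \<phi> u" and w2: "\<forall>v. v \<noteq> w \<longrightarrow> \<phi> w < \<phi> v + c * dist v w"
    using ekeland[OF _ \<phi>lsc c, of u] \<phi>nn by blast
  have dwu: "dist w u \<le> G / c"
  proof -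
    have "c * dist w u \<le> G" using w1 \<phi>u \<phi>nn[of w] by linarith
    thus ?thesis using c by (simp add: field_simps)
  qed
  have gw0: "g w > 0"
  proof (rule ccontr)
    assume "\<not> g w > 0"
    hence "w \<in> Sf g" unfolding Sf_def by simp
    hence "G / c < norm (w - u)" using far unfolding g_def by blast
    thus False using dwu by (simp add: dist_norm)
  qed
  have gwG: "g w \<le> ereal G"
  proof (rule ccontr)
    assume "\<not> g w \<le> ereal G"
    hence "\<phi> w = G" unfolding \<phi>_def using gw0 by auto
    hence "c * dist w u \<le> 0" using w1 \<phi>u by simp
    hence "dist w u \<le> 0" using c by (simp add: mult_le_0_iff)
    hence "dist w u = 0" by simp
    hence "w = u" by simp
    thus False using \<open>\<not> g w \<le> ereal G\<close> u unfolding g_def by simp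
  qed
  obtain gw where gw: "g w = ereal gw" using gnm[of w] gwG by (cases "g w") auto
  have gwpos: "gw > 0" using gw0 gw by simp
  have \<phi>w: "\<phi> w = gw" unfolding \<phi>_def using gw gwpos gwG by auto
  define fw where "fw = gw - p w"
  have fw: "f w = ereal fw" unfolding fw_def using gfin[OF gw] .
  obtain r0 where r0: "r0 > 0" "\<forall>v. dist v w < r0 \<longrightarrow> 0 < g v" using glsc[of 0 w] gw0 by blast
  have gmin: "gw \<le> fv + p v + c * norm (v - w)" if fv: "f v = ereal fv" for v fv
  proof (rule ccontr)
    assume "\<not> gw \<le> fv + p v + c * norm (v - w)"
    hence lt: "fv + p v + c * norm (v - w) < gw" by simp
    have vw: "v \<noteq> w"
    proof
      assume "v = w"
      hence "fv = fw" using fv fw by simp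
      thus False using lt \<open>v = w\<close> unfolding fw_def by simp
    qed
    hence nvw: "norm (v - w) > 0" by simp
    define s where "s = min 1 (r0 / (2 * norm (v - w)))"
    have s: "0 < s" "s \<le> 1" unfolding s_def using r0 nvw by auto
    define vs where "vs = (1 - s) *\<^sub>R w + s *\<^sub>R v"
    have vsw: "vs - w = s *\<^sub>R (v - w)" unfolding vs_def by (simp add: algebra_simps)
    have dvs: "dist vs w = s * norm (v - w)" using vsw s by (simp add: dist_norm)
    have "s * norm (v - w) \<le> r0 / 2"
    proof -
      have "s \<le> r0 / (2 * norm (v - w))" unfolding s_def by simp
      hence "s * norm (v - w) \<le> r0 / (2 * norm (v - w)) * norm (v - w)" by (rule mult_right_mono) simp
      also have "\<dots> = r0 / 2" using nvw by simp
      finally show ?thesis .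
    qed
    hence "dist vs w < r0" using dvs r0 by simp
    hence gvs0: "0 < g vs" using r0 by blast
    have fvs: "f vs \<le> ereal ((1 - s) * fw + s * fv)" unfolding vs_def by (rule G0_cvx[OF f fw fv]) (use s in auto)
    have pvs: "p vs \<le> (1 - s) * p w + s * p v" unfolding vs_def by (rule convex_onD[OF cp]) (use s in auto)
    have "g vs \<le> ereal ((1 - s) * fw + s * fv) + ereal (p vs)" unfolding g_def using fvs by (intro add_right_mono)
    also have "\<dots> \<le> ereal ((1 - s) * fw + s * fv + ((1 - s) * p w + s * p v))" using pvs by simp
    finally have gvsle: "g vs \<le> ereal ((1 - s) * gw + s * (fv + p v))" unfolding fw_def by (simp add: algebra_simps)
    obtain gs where gs: "g vs = ereal gs" using gvsle gnm[of vs] by (cases "g vs") auto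
    have "ereal (\<phi> vs) \<le> g vs" using \<phi>le[OF gvs0] .
    hence "\<phi> vs \<le> (1 - s) * gw + s * (fv + p v)" using gvsle gs by simp
    hence "\<phi> vs + c * dist vs w \<le> (1 - s) * gw + s * (fv + p v) + c * (s * norm (v - w))" using dvs by simp
    also have "\<dots> = gw - s * (gw - (fv + p v + c * norm (v - w)))" by (simp add: algebra_simps)
    also have "\<dots> < gw" using lt s by simp
    finally have "\<phi> vs + c * dist vs w < \<phi> w" using \<phi>w by simp
    moreover have "vs \<noteq> w" using vsw s vw by auto
    ultimately show False using w2 by (meson not_less_iff_gr_or_eq order_less_le_trans)
  qed
  define D where "D = {a. f (w + a) \<noteq> \<infinity>}"
  define F where "F a = real_of_ereal (f (w + a)) - fw" for a
  define Q where "Q h = p (w + h) - p w + c * norm h" for h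
  have Dfin: "a \<in> D \<Longrightarrow> f (w + a) = ereal (real_of_ereal (f (w + a)))" for a
    unfolding D_def using G0_nm[OF f, of "w + a"] by (cases "f (w + a)") auto
  have cF: "convex_on D F"
    unfolding convex_on_def
  proof (intro conjI ballI allI impI)
    show "convex D"
      unfolding convex_def
    proof (intro ballI allI impI)
      fix a b and s t :: real assume ab: "a \<in> D" "b \<in> D" and st: "0 \<le> s" "0 \<le> t" "s + t = 1"
      have e: "w + (s *\<^sub>R a + t *\<^sub>R b) = (1 - t) *\<^sub>R (w + a) + t *\<^sub>R (w + b)"
        using st by (simp add: algebra_simps flip: scaleR_add_left)
      have "f (w + (s *\<^sub>R a + t *\<^sub>R b)) \<le> ereal ((1 - t) * real_of_ereal (f (w + a)) + t * real_of_ereal (f (w + b)))"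
        unfolding e by (rule G0_cvx[OF f Dfin[OF ab(1)] Dfin[OF ab(2)]]) (use st in auto)
      thus "s *\<^sub>R a + t *\<^sub>R b \<in> D" unfolding D_def by auto
    qed
  next
    fix a b and s t :: real assume ab: "a \<in> D" "b \<in> D" and st: "0 \<le> s" "0 \<le> t" "s + t = 1"
    have e: "w + (s *\<^sub>R a + t *\<^sub>R b) = (1 - t) *\<^sub>R (w + a) + t *\<^sub>R (w + b)"
      using st by (simp add: algebra_simps flip: scaleR_add_left)
    have le: "f (w + (s *\<^sub>R a + t *\<^sub>R b)) \<le> ereal ((1 - t) * real_of_ereal (f (w + a)) + t * real_of_ereal (f (w + b)))"
      unfolding e by (rule G0_cvx[OF f Dfin[OF ab(1)] Dfin[OF ab(2)]]) (use st in auto)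
    have "real_of_ereal (f (w + (s *\<^sub>R a + t *\<^sub>R b))) \<le> (1 - t) * real_of_ereal (f (w + a)) + t * real_of_ereal (f (w + b))"
      using le G0_nm[OF f, of "w + (s *\<^sub>R a + t *\<^sub>R b)"] by (cases "f (w + (s *\<^sub>R a + t *\<^sub>R b))") auto
    moreover have "1 - t = s" using st by simp
    moreover have "s * (real_of_ereal (f (w + a)) - fw) + t * (real_of_ereal (f (w + b)) - fw)
        = s * real_of_ereal (f (w + a)) + t * real_of_ereal (f (w + b)) - (s + t) * fw" by (simp add: algebra_simps)
    ultimately show "F (s *\<^sub>R a + t *\<^sub>R b) \<le> s * F a + t * F b"
      unfolding F_def using st(3) by simp
  qed
  have D0: "0 \<in> D" unfolding D_def using fw by simp
  have F0: "F 0 = 0" unfolding F_def using fw by simp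
  have cQ: "convex_on UNIV Q"
    unfolding convex_on_def
  proof (intro conjI ballI allI impI)
    fix a b and s t :: real assume st: "0 \<le> s" "0 \<le> t" "s + t = 1"
    have e: "w + (s *\<^sub>R a + t *\<^sub>R b) = (1 - t) *\<^sub>R (w + a) + t *\<^sub>R (w + b)"
      using st by (simp add: algebra_simps flip: scaleR_add_left)
    have pe: "p (w + (s *\<^sub>R a + t *\<^sub>R b)) \<le> (1 - t) * p (w + a) + t * p (w + b)"
      unfolding e by (rule convex_onD[OF cp]) (use st in auto)
    have ne: "norm (s *\<^sub>R a + t *\<^sub>R b) \<le> s * norm a + t * norm b"
      using norm_triangle_ineq[of "s *\<^sub>R a" "t *\<^sub>R b"] st by simp
    have "1 - t = s" using st by simp
    moreover have "c * norm (s *\<^sub>R a + t *\<^sub>R b) \<le> c * (s * norm a + t * norm b)"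
      using ne c by (simp add: mult_left_mono)
    ultimately have "Q (s *\<^sub>R a + t *\<^sub>R b) \<le> s * p (w + a) + t * p (w + b) - p w + c * (s * norm a + t * norm b)"
      unfolding Q_def using pe by simp
    also have "\<dots> = s * Q a + t * Q b"
    proof -
      have "s * Q a + t * Q b = s * p (w + a) + t * p (w + b) - (s + t) * p w + c * (s * norm a + t * norm b)"
        unfolding Q_def by (simp add: algebra_simps)
      thus ?thesis using st(3) by simp
    qed
    finally show "Q (s *\<^sub>R a + t *\<^sub>R b) \<le> s * Q a + t * Q b" .
  qed simp
  have Q0: "Q 0 = 0" unfolding Q_def by simp
  have mn: "\<forall>a\<in>D. 0 \<le> F a + Q a"
  proof
    fix a assume a: "a \<in> D"
    have "gw \<le> real_of_ereal (f (w + a)) + p (w + a) + c * norm (w + a - w)"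
      by (rule gmin[OF Dfin[OF a]])
    thus "0 \<le> F a + Q a" unfolding F_def Q_def fw_def by simp
  qed
  obtain M where M: "M \<ge> 0" "\<forall>h. norm h \<le> 1 \<longrightarrow> \<bar>p (w + h) - p w\<bar> \<le> M * norm h"
    using p_loclip[OF cp lip xi] by blast
  have QM: "\<forall>h. norm h \<le> 1 \<longrightarrow> Q h \<le> M + c"
  proof (intro allI impI)
    fix h :: 'a assume h: "norm h \<le> 1"
    have "p (w + h) - p w \<le> M * norm h" using M(2) h by fastforce
    also have "\<dots> \<le> M" using M(1) h by (simp add: mult_left_le)
    moreover have "c * norm h \<le> c" using h c by (simp add: mult_left_le)
    ultimately show "Q h \<le> M + c" unfolding Q_def by simp
  qed
  obtain L :: "'a \<Rightarrow>\<^sub>L real" where L1: "\<forall>a\<in>D. blinfun_apply L a \<le> F a" and L2: "\<forall>h. - blinfun_apply L h \<le> Q h"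
    using sandwich[OF cF D0 F0 cQ Q0 mn QM] by blast
  have Lsub: "L \<in> subdiff f w"
    unfolding subdiff_def using fw
  proof (simp, intro allI)
    fix v
    show "ereal (blinfun_apply L (v - w)) \<le> f v - ereal fw"
    proof (cases "f v = \<infinity>")
      case True thus ?thesis by simp
    next
      case False
      hence aD: "v - w \<in> D" unfolding D_def by simp
      have "blinfun_apply L (v - w) \<le> F (v - w)" using L1 aD by blast
      hence "blinfun_apply L (v - w) \<le> real_of_ereal (f v) - fw" unfolding F_def by simp
      moreover have "f v = ereal (real_of_ereal (f v))" using Dfin[OF aD] by simp
      ultimately show ?thesis by (metis ereal_minus(1) ereal_less_eq(3))
    qed
  qed
  have b1: "- blinfun_apply L h \<le> (\<xi> + c) * norm h" for h
  proof (rule lim_bound[where A = "p x + \<xi> * norm (w - x) - p w"], intro allI impI)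
    fix t :: real assume t: "t > 0"
    have "- blinfun_apply L (t *\<^sub>R h) \<le> Q (t *\<^sub>R h)" using L2 by blast
    also have "\<dots> \<le> p x + \<xi> * norm (w - x) - p w + t * ((\<xi> + c) * norm h)"
    proof -
      have "p (w + t *\<^sub>R h) \<le> p x + \<xi> * norm (w + t *\<^sub>R h - x)" using lip[rule_format, of "w + t *\<^sub>R h"] by linarith
      moreover have "norm (w + t *\<^sub>R h - x) \<le> norm (w - x) + t * norm h"
        using norm_triangle_ineq[of "w - x" "t *\<^sub>R h"] t by (simp add: algebra_simps)
      moreover have "\<xi> * norm (w + t *\<^sub>R h - x) \<le> \<xi> * (norm (w - x) + t * norm h)"
        using calculation(2) xi by (rule mult_left_mono)
      ultimately have "p (w + t *\<^sub>R h) \<le> p x + \<xi> * norm (w - x) + \<xi> * (t * norm h)"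
        by (simp add: distrib_left)
      thus ?thesis unfolding Q_def using t by (simp add: algebra_simps)
    qed
    finally have "- (t * blinfun_apply L h) \<le> p x + \<xi> * norm (w - x) - p w + t * ((\<xi> + c) * norm h)"
      by (simp add: blinfun.scaleR_right)
    hence "- blinfun_apply L h \<le> (p x + \<xi> * norm (w - x) - p w) / t + (\<xi> + c) * norm h"
      using t by (simp add: field_simps)
    thus "- blinfun_apply L h \<le> (p x + \<xi> * norm (w - x) - p w) / t + (\<xi> + c) * norm h" .
  qed
  have nL: "norm L \<le> \<xi> + c"
  proof (rule norm_blinfun_bound)
    show "0 \<le> \<xi> + c" using xi c by simp
    fix h
    have "blinfun_apply L h \<le> (\<xi> + c) * norm h" using b1[of "-h"] by (simp add: blinfun.minus_right)
    thus "norm (blinfun_apply L h) \<le> (\<xi> + c) * norm h" using b1[of h] by simp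
  qed
  have fwR: "ereal (- \<xi> * norm (w - x) - \<bar>p x\<bar>) \<le> f w"
  proof -
    have "p w \<le> p x + \<xi> * norm (w - x)" using lip[rule_format, of w] by linarith
    hence "- \<xi> * norm (w - x) - \<bar>p x\<bar> \<le> fw" using gwpos unfolding fw_def by linarith
    thus ?thesis using fw by simp
  qed
  show ?thesis using Lsub nL fwR by blast
qed



lemma dst_nn: "0 \<le> dst x S"
  unfolding dst_def by (rule INF_greatest) simp

lemma part3:
  fixes f :: "'a::banach \<Rightarrow> ereal"
  assumes f: "f \<in> Gamma0" and lt: "ereal \<epsilon> < bdmod f"
  shows "ErF (Ptb f \<epsilon>) > 0"
proof -
  define c0 where "c0 = (if bdmod f = \<infinity> then 1 else real_of_ereal (bdmod f) - \<epsilon>)"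
  have bfin: "bdmod f \<noteq> \<infinity> \<Longrightarrow> bdmod f = ereal (real_of_ereal (bdmod f))"
    using lt by (cases "bdmod f") auto
  have c0: "c0 > 0" unfolding c0_def using lt bfin by (cases "bdmod f") auto
  have KP: "\<not> (ereal \<xi> + bdmod f \<le> ereal \<epsilon> + ereal (\<xi> + k))" if "k < c0" for \<xi> k
  proof (cases "bdmod f = \<infinity>")
    case True thus ?thesis by simp
  next
    case False
    then obtain b where b: "bdmod f = ereal b" using bfin by blast
    have "k < b - \<epsilon>" using that False unfolding c0_def b by simp
    thus ?thesis using b by simp
  qed
  have KA: "ereal (\<xi> + c0) \<le> T" if "ereal \<xi> + bdmod f \<le> ereal \<epsilon> + T" for \<xi> T
  proof (cases "bdmod f = \<infinity>")
    case True
    hence "T = \<infinity>" using that by (cases T) auto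
    thus ?thesis by simp
  next
    case False
    then obtain b where b: "bdmod f = ereal b" using bfin by blast
    have c0b: "c0 = b - \<epsilon>" unfolding c0_def using b by simp
    show ?thesis using that unfolding b c0b by (cases T) auto
  qed
  define c where "c = c0 / 2"
  have c: "c > 0" "c < c0" unfolding c_def using c0 by auto
  have EB: "ereal c \<le> Er g" if g: "g \<in> Ptb f \<epsilon>" for g
  proof -
    obtain p x \<xi> where SG: "Sf g \<noteq> {}" and cp: "convex_on UNIV p" and gdef: "g = (\<lambda>u. f u + ereal (p u))"
      and x: "x \<in> Sfeq f" and xi: "\<xi> \<ge> 0" and cond: "ereal \<xi> + bdmod f \<le> ereal \<epsilon> + tau f x \<xi> \<bar>p x\<bar>"
      and lip: "\<forall>u. \<bar>p u - p x\<bar> \<le> \<xi> * norm (u - x)"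
      using g unfolding Ptb_def by blast
    have fx: "f x = 0" using x unfolding Sfeq_def by simp
    show ?thesis
      unfolding Er_def
    proof (rule INF_greatest)
      fix u assume "u \<in> {x. g x > 0}"
      hence u: "0 < g u" by simp
      obtain z0 where z0: "z0 \<in> Sf g" using SG by blast
      have dfin: "dst u (Sf g) \<noteq> \<infinity>"
      proof -
        have "dst u (Sf g) \<le> ereal (norm (z0 - u))" unfolding dst_def by (rule INF_lower[OF z0])
        thus ?thesis by auto
      qed
      show "ereal c \<le> g u / dst u (Sf g)"
      proof (rule ratio_ge[OF c(1) u dst_nn dfin])
        assume gui: "g u \<noteq> \<infinity>"
        show "ereal c * dst u (Sf g) \<le> g u"
        proof (cases "0 \<in> interior (subdiff f x)")
          case True
          have "tau f x \<xi> \<bar>p x\<bar> = dst 0 (frontier (subdiff f x))" unfolding tau_def using True by simp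
          hence T: "ereal (\<xi> + c0) \<le> dst 0 (frontier (subdiff f x))" using KA cond by simp
          show ?thesis
            using keyA[OF f fx cp lip xi True c0 T, of u] SG u gui unfolding gdef c_def by simp
        next
          case False
          have tau: "tau f x \<xi> \<bar>p x\<bar> = (INF u\<in>{u. f u \<ge> ereal (- \<xi> * norm (u - x) - \<bar>p x\<bar>)}. dst 0 (subdiff f u))"
            unfolding tau_def using False by simp
          obtain G where G: "g u = ereal G" using u gui by (cases "g u") auto
          show ?thesis
          proof (cases "\<exists>z\<in>Sf g. norm (z - u) \<le> G / c")
            case True
            then obtain z where z: "z \<in> Sf g" "norm (z - u) \<le> G / c" by blast
            have "dst u (Sf g) \<le> ereal (norm (z - u))" unfolding dst_def by (rule INF_lower[OF z(1)])
            also have "\<dots> \<le> ereal (G / c)" using z(2) by simp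
            finally have "ereal c * dst u (Sf g) \<le> ereal c * ereal (G / c)"
              by (rule ereal_mult_left_mono) (use c in simp)
            also have "\<dots> = ereal G" using c by simp
            finally show ?thesis using G by simp
          next
            case False
            hence far: "\<forall>z\<in>Sf (\<lambda>u. f u + ereal (p u)). G / c < norm (z - u)" unfolding gdef by auto
            obtain w L where wL: "L \<in> subdiff f w" "norm L \<le> \<xi> + c"
                "ereal (- \<xi> * norm (w - x) - \<bar>p x\<bar>) \<le> f w"
              using keyB[OF f cp lip xi c(1), of u G] u G far unfolding gdef by blast
            have "tau f x \<xi> \<bar>p x\<bar> \<le> dst 0 (subdiff f w)"
              unfolding tau by (rule INF_lower) (use wL(3) in simp)
            also have "dst 0 (subdiff f w) \<le> ereal (norm (L - 0))" unfolding dst_def by (rule INF_lower[OF wL(1)])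
            also have "\<dots> \<le> ereal (\<xi> + c)" using wL(2) by simp
            finally have "ereal \<xi> + bdmod f \<le> ereal \<epsilon> + ereal (\<xi> + c)"
              using cond by (meson add_left_mono order_trans)
            thus ?thesis using KP[OF c(2)] by blast
          qed
        qed
      qed
    qed
  qed
  have "ereal c \<le> ErF (Ptb f \<epsilon>)" unfolding ErF_def by (rule INF_greatest) (use EB in blast)
  thus ?thesis using c(1) by (meson ereal_less_eq(3) less_le_trans zero_ereal_def ereal_less(2))
qed


theorem mainTheorem10:
  fixes f :: "'a::banach \<Rightarrow> ereal" and \<epsilon> :: real
  assumes "f \<in> Gamma0" and "Sf f \<noteq> {}" and "\<epsilon> \<ge> 0"
  shows "(ErF (Ptbw f \<epsilon>) > 0 \<longrightarrow> ErF (Ptbwl f \<epsilon>) > 0)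
       \<and> (ErF (Ptbwl f \<epsilon>) > 0 \<longrightarrow> ereal \<epsilon> \<le> bdmod f)
       \<and> (ereal \<epsilon> < bdmod f \<longrightarrow> ErF (Ptb f \<epsilon>) > 0)
       \<and> (ErF (Ptb f \<epsilon>) > 0 \<longrightarrow> ErF (Ptbl f \<epsilon>) > 0)"
proof (intro conjI impI)
  assume "ErF (Ptbw f \<epsilon>) > 0"
  thus "ErF (Ptbwl f \<epsilon>) > 0" using ErF_mono[OF Ptbwl_sub, of f \<epsilon>] by simp
next
  assume "ErF (Ptbwl f \<epsilon>) > 0"
  thus "ereal \<epsilon> \<le> bdmod f" using part2[OF assms(1)] by blast
next
  assume "ereal \<epsilon> < bdmod f"
  thus "ErF (Ptb f \<epsilon>) > 0" using part3[OF assms(1)] by blast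
next
  assume "ErF (Ptb f \<epsilon>) > 0"
  thus "ErF (Ptbl f \<epsilon>) > 0" using ErF_mono[OF Ptbl_sub, of f \<epsilon>] by simp
qed

end
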